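(* $\mathrm T_s(\mathbb F)\subseteq\mathsf{TC}^0$: every language recognized by a transformer over floats with (strong) saturated attention and size-preserving embedding and activation functions is in (non-uniform) $\mathsf{TC}^0$.
   Context: Datatypes. All values are binary strings. A float is a rational number whose denominator is a power of $2$, encoded as a sign bit together with a pair $\langle p,q\rangle$ of unsigned binary integers (value $(2s-1)p/q$, $q$ a power of $2$); addition and multiplication are exact rational operations. Division is via an approximate inverse: for an integer $p$, $p^{-1}$ has numerator $\lfloor 2^{|p|}/p\rfloor$ and denominator $2^{|p|}$; dividing by a float $\langle p,q\rangle$ multiplies by numerator $\lfloor 2^{|p|}/p\rfloor\cdot q$ over denominator $2^{|p|}$. The size $|x|$ of a value is its length in bits. A function $f$ on bitstrings is size-preserving if there are constants $c,N$ with $|f(x)|\le c|x|$ whenever $|x|\ge N$; $\mathcal S$ is the set of such functions. Saturated attention: for $a\in\mathbb D^n$, $\mathcal M(a)=\{i:a_i=\max_j a_j\}$, $s(a)_j=1/|\mathcal M(a)|$ for $j\in\mathcal M(a)$, else $0$. Transformer over datatype $\mathbb D$ with finite alphabet $\Sigma$, dimension $k$, $L$ layers, $H$ heads: embedding $\phi:\Sigma\times\mathbb N\to\mathbb D^k$ in $\mathcal S$, scoring functions $s_{\ell,h}:\mathbb D^k\times\mathbb D^k\to\mathbb D$, activation functions $f_\ell\in\mathcal S$. On $w\in\Sigma^n$: $v_{0,i}=\phi(w_i,i)$; $a_{\ell,h,i,j}=s_{\ell,h}(v_{\ell,i},v_{\ell,j})$; $b_{\ell+1,h,i}=\sum_j\alpha(a_{\ell,h,i,\cdot})_j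 v_{\ell,j}$ (arithmetic in $\mathbb D$); $v_{\ell+1,i}=f_{\ell+1}(v_{\ell,i},b_{\ell+1,1,i},\dots,b_{\ell+1,H,i})$. It recognizes $L$ if for a rational affine map $W,b$: $W v_{L,1}(w)+b>0\iff w\in L$. $\mathrm T_\alpha(\mathbb D)$ is the class of languages so recognized with attention $\alpha$, datatype $\mathbb D$, some $k$, and embedding/activation functions in $\mathcal S$. $\mathsf{TC}^0$ is the class of languages recognized by non-uniform circuit families $\{C_n\}$ of polynomial size and constant depth, with unbounded fan-in AND, OR and threshold gates (a threshold gate $\theta_{\ge k}$ outputs $1$ iff at least $k$ of its inputs are $1$, similarly $\theta_{\le k}$), whose leaves are input bits and their negations. For a language over a general alphabet $\Sigma$, each symbol is encoded as a one-hot vector over $\Sigma$ and the family recognizes $L$ iff $C_{|w|\cdot|\Sigma|}(w)=1\iff w\in L$. *)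

theory Defs
  imports Main "HOL-Library.Log_Nat"
begin

text \<open>Length of the binary representation of a natural number (0 is written as one bit).\<close>
definition bitlen :: "nat \<Rightarrow> nat" where
  "bitlen n = max 1 (floorlog 2 n)"

text \<open>A float is a sign bit s together with a pair p, q of unsigned binary integers,
  q a power of two; we store q = 2^e via its exponent e. Its value is (2s-1) p / q.\<close>
datatype fl = Fl (fl_sign: bool) (fl_num: nat) (fl_exp: nat)

definition fl_val :: "fl \<Rightarrow> rat" where
  "fl_val x = (if fl_sign x then 1 else -1) * of_nat (fl_num x) / 2 ^ fl_exp x"

definition fl_size :: "fl \<Rightarrow> nat" where
  "fl_size x = 1 + bitlen (fl_num x) + bitlen (2 ^ fl_exp x)"

definition vec_size :: "fl list \<Rightarrow> nat" where
  "vec_size v = sum_list (map fl_size v)"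

definition vecs_size :: "fl list list \<Rightarrow> nat" where
  "vecs_size vs = sum_list (map vec_size vs)"

definition fl_zero :: fl where
  "fl_zero = Fl True 0 0"

definition sgn_int :: "bool \<Rightarrow> int" where
  "sgn_int s = (if s then 1 else -1)"

definition fl_mul :: "fl \<Rightarrow> fl \<Rightarrow> fl" where
  "fl_mul x y = Fl (fl_sign x = fl_sign y) (fl_num x * fl_num y) (fl_exp x + fl_exp y)"

definition fl_add :: "fl \<Rightarrow> fl \<Rightarrow> fl" where
  "fl_add x y = (let E = max (fl_exp x) (fl_exp y);
                     a = sgn_int (fl_sign x) * int (fl_num x) * 2 ^ (E - fl_exp x)
                       + sgn_int (fl_sign y) * int (fl_num y) * 2 ^ (E - fl_exp y)
                 in Fl (a \<ge> 0) (nat \<bar>a\<bar>) E)"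

definition fl_inv_nat :: "nat \<Rightarrow> fl" where
  "fl_inv_nat m = Fl True (2 ^ bitlen m div m) (bitlen m)"

definition vec_add :: "fl list \<Rightarrow> fl list \<Rightarrow> fl list" where
  "vec_add u v = map2 fl_add u v"

definition vec_scale :: "fl \<Rightarrow> fl list \<Rightarrow> fl list" where
  "vec_scale a v = map (fl_mul a) v"

definition sat_attn :: "fl list \<Rightarrow> fl list" where
  "sat_attn a = (let m = Max (set (map fl_val a));
                     M = card {j. j < length a \<and> fl_val (a ! j) = m}
                 in map (\<lambda>x. if fl_val x = m then fl_inv_nat M else fl_zero) a)"

definition weighted_sum :: "nat \<Rightarrow> fl list \<Rightarrow> fl list list \<Rightarrow> fl list" where
  "weighted_sum k ws vs =
     foldl (\<lambda>acc (a, v). vec_add acc (vec_scale a v)) (replicate k fl_zero) (zip ws vs)"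

text \<open>One layer: scoring functions sc h (heads h = 0..H-1) and activation f, which receives
  the list [v_i, b_1, ..., b_H].\<close>
definition tf_layer :: "nat \<Rightarrow> nat \<Rightarrow> (nat \<Rightarrow> fl list \<Rightarrow> fl list \<Rightarrow> fl)
    \<Rightarrow> (fl list list \<Rightarrow> fl list) \<Rightarrow> fl list list \<Rightarrow> fl list list" where
  "tf_layer k H sc f vs =
     map (\<lambda>vi. f (vi # map (\<lambda>h. weighted_sum k (sat_attn (map (\<lambda>vj. sc h vi vj) vs)) vs) [0..<H]))
         vs"

text \<open>States v_l after l layers; positions are 1-based for the embedding.
  Scoring functions s l h are used in layer l (l = 0..L-1), activation f (l+1) produces v_(l+1).\<close>
primrec tf_run :: "nat \<Rightarrow> nat \<Rightarrow> ('a \<Rightarrow> nat \<Rightarrow> fl list)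
    \<Rightarrow> (nat \<Rightarrow> nat \<Rightarrow> fl list \<Rightarrow> fl list \<Rightarrow> fl) \<Rightarrow> (nat \<Rightarrow> fl list list \<Rightarrow> fl list)
    \<Rightarrow> 'a list \<Rightarrow> nat \<Rightarrow> fl list list" where
  "tf_run k H \<phi> s f w 0 = map2 \<phi> w [1..<length w + 1]"
| "tf_run k H \<phi> s f w (Suc l) = tf_layer k H (s l) (f (Suc l)) (tf_run k H \<phi> s f w l)"

definition emb_size_preserving :: "('a \<Rightarrow> nat \<Rightarrow> fl list) \<Rightarrow> bool" where
  "emb_size_preserving \<phi> \<longleftrightarrow>
     (\<exists>c N::nat. \<forall>\<sigma> i. bitlen i \<ge> N \<longrightarrow> vec_size (\<phi> \<sigma> i) \<le> c * bitlen i)"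

definition act_domain :: "nat \<Rightarrow> nat \<Rightarrow> fl list list set" where
  "act_domain k H = {xs. length xs = H + 1 \<and> (\<forall>x\<in>set xs. length x = k)}"

definition act_size_preserving :: "nat \<Rightarrow> nat \<Rightarrow> (fl list list \<Rightarrow> fl list) \<Rightarrow> bool" where
  "act_size_preserving k H g \<longleftrightarrow>
     (\<exists>c N::nat. \<forall>xs \<in> act_domain k H. vecs_size xs \<ge> N \<longrightarrow> vec_size (g xs) \<le> c * vecs_size xs)"

definition T_s_F :: "'a list set set" where
  "T_s_F = {Lang. \<exists>(k::nat) (nL::nat) (H::nat) (\<phi>::'a \<Rightarrow> nat \<Rightarrow> fl list) s f (W::rat list) (b::rat).
      (\<forall>\<sigma> i. length (\<phi> \<sigma> i) = k) \<and> emb_size_preserving \<phi> \<and>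
      (\<forall>l \<in> {1..nL}. (\<forall>xs \<in> act_domain k H. length (f l xs) = k) \<and> act_size_preserving k H (f l)) \<and>
      length W = k \<and>
      (\<forall>w. w \<noteq> [] \<longrightarrow>
         ((\<Sum>(c, x) \<leftarrow> zip W (hd (tf_run k H \<phi> s f w nL)). c * fl_val x) + b > 0 \<longleftrightarrow> w \<in> Lang))}"

text \<open>Circuits with unbounded fan-in AND, OR and threshold gates; leaves are input bits
  (Inp i False) or their negations (Inp i True). Circuits are represented as formulas (trees);
  for constant depth this yields the same class with polynomial size.\<close>
datatype circ = Inp nat bool | AndG "circ list" | OrG "circ list"
  | ThrGe nat "circ list" | ThrLe nat "circ list"

fun ceval :: "bool list \<Rightarrow> circ \<Rightarrow> bool" where
  "ceval x (Inp i neg) = ((if i < length x then x ! i else False) \<noteq> neg)"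
| "ceval x (AndG cs) = list_all id (map (ceval x) cs)"
| "ceval x (OrG cs) = list_ex id (map (ceval x) cs)"
| "ceval x (ThrGe t cs) = (length (filter id (map (ceval x) cs)) \<ge> t)"
| "ceval x (ThrLe t cs) = (length (filter id (map (ceval x) cs)) \<le> t)"

fun csize :: "circ \<Rightarrow> nat" where
  "csize (Inp i neg) = 1"
| "csize (AndG cs) = 1 + sum_list (map csize cs)"
| "csize (OrG cs) = 1 + sum_list (map csize cs)"
| "csize (ThrGe t cs) = 1 + sum_list (map csize cs)"
| "csize (ThrLe t cs) = 1 + sum_list (map csize cs)"

fun cdepth :: "circ \<Rightarrow> nat" where
  "cdepth (Inp i neg) = 0"
| "cdepth (AndG cs) = 1 + fold max (map cdepth cs) 0"
| "cdepth (OrG cs) = 1 + fold max (map cdepth cs) 0"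
| "cdepth (ThrGe t cs) = 1 + fold max (map cdepth cs) 0"
| "cdepth (ThrLe t cs) = 1 + fold max (map cdepth cs) 0"

definition alph_list :: "'a::finite list" where
  "alph_list = (SOME xs. distinct xs \<and> set xs = UNIV)"

definition one_hot :: "'a::finite \<Rightarrow> bool list" where
  "one_hot a = map (\<lambda>b. b = a) alph_list"

definition encode_word :: "'a::finite list \<Rightarrow> bool list" where
  "encode_word w = concat (map one_hot w)"

definition TC0 :: "'a::finite list set set" where
  "TC0 = {Lang. \<exists>(C::nat \<Rightarrow> circ) (d::nat) (c::nat).
      (\<forall>n. cdepth (C n) \<le> d) \<and> (\<forall>n. csize (C n) \<le> c * (n + 1) ^ c) \<and>
      (\<forall>w. ceval (encode_word w) (C (length w * card (UNIV :: 'a set))) \<longleftrightarrow> w \<in> Lang)}"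

end

theory Submission
  imports Defs
begin

lemma bl_ge1: "Defs.bitlen n \<ge> 1" by (simp add: Defs.bitlen_def)

lemma bl_le_iff: "K \<ge> 1 \<Longrightarrow> Defs.bitlen n \<le> K \<longleftrightarrow> n < 2 ^ K"
  by (auto simp: Defs.bitlen_def floorlog_le_iff)

lemma bl_less: "n < 2 ^ Defs.bitlen n"
  using bl_le_iff[OF bl_ge1, of n n] by simp

lemma bl_mono: "m \<le> n \<Longrightarrow> Defs.bitlen m \<le> Defs.bitlen n"
  unfolding Defs.bitlen_def using floorlog_mono[of m n 2] by linarith

lemma bl_pow: "Defs.bitlen (2 ^ e) = Suc e"
proof -
  have "floorlog 2 (1 * 2 ^ e) = floorlog 2 1 + e" by (rule floorlog_power) auto
  moreover have "floorlog 2 1 = 1" by (simp add: floorlog_def)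
  ultimately show ?thesis by (simp add: Defs.bitlen_def)
qed

lemma bl_two_pow: "n \<ge> 1 \<Longrightarrow> 2 ^ Defs.bitlen n \<le> 2 * n"
proof -
  assume n: "n \<ge> 1"
  have b: "2 ^ (floorlog 2 n - 1) \<le> n" using floorlog_bounds[of n 2] n by auto
  have f: "floorlog 2 n \<ge> 1" using floorlog_geI[of 2 1 n] n by auto
  hence "Defs.bitlen n = floorlog 2 n" by (simp add: Defs.bitlen_def)
  moreover have "(2::nat) ^ floorlog 2 n = 2 * 2 ^ (floorlog 2 n - 1)"
    using f by (metis Suc_diff_le diff_Suc_1 power_Suc)
  ultimately show ?thesis using b by simp
qed

section \<open>floats\<close>

definition iv :: "fl \<Rightarrow> int" where "iv x = sgn_int (fl_sign x) * int (fl_num x)"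
definition canonI :: "int \<Rightarrow> nat \<Rightarrow> fl" where "canonI a E = Fl (a \<ge> 0) (nat \<bar>a\<bar>) E"
definition isCanon :: "fl \<Rightarrow> bool" where "isCanon x \<longleftrightarrow> x = canonI (iv x) (fl_exp x)"

lemma iv_canonI[simp]: "iv (canonI a E) = a"
  by (auto simp: iv_def canonI_def sgn_int_def)
lemma exp_canonI[simp]: "fl_exp (canonI a E) = E" by (simp add: canonI_def)

lemma fl_val_iv: "fl_val x = of_int (iv x) / 2 ^ fl_exp x"
  by (simp add: fl_val_def iv_def sgn_int_def)

lemma fl_add_canon: "fl_add x y = canonI (iv x * 2 ^ (max (fl_exp x) (fl_exp y) - fl_exp x)
   + iv y * 2 ^ (max (fl_exp x) (fl_exp y) - fl_exp y)) (max (fl_exp x) (fl_exp y))"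
  by (simp add: fl_add_def Let_def canonI_def iv_def)

lemma iv_mul[simp]: "iv (fl_mul x y) = iv x * iv y"
  by (simp add: fl_mul_def iv_def sgn_int_def)
lemma exp_mul[simp]: "fl_exp (fl_mul x y) = fl_exp x + fl_exp y"
  by (simp add: fl_mul_def)
lemma val_mul: "fl_val (fl_mul x y) = fl_val x * fl_val y"
  by (simp add: fl_val_iv power_add)

lemma scale_pow: "E0 \<le> E \<Longrightarrow> (of_int z * 2 ^ (E - E0)) / (2::rat) ^ E = of_int z / 2 ^ E0"
proof -
  assume "E0 \<le> E"
  hence "(2::rat) ^ E = 2 ^ (E - E0) * 2 ^ E0" by (simp flip: power_add)
  thus ?thesis by simp
qed

lemma canon_eq_iff:
  "y = canonI z E \<longleftrightarrow> isCanon y \<and> fl_exp y = E \<and> fl_val y = of_int z / 2 ^ E"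
proof
  assume "y = canonI z E" thus "isCanon y \<and> fl_exp y = E \<and> fl_val y = of_int z / 2 ^ E"
    by (simp add: isCanon_def fl_val_iv)
next
  assume a: "isCanon y \<and> fl_exp y = E \<and> fl_val y = of_int z / 2 ^ E"
  have e: "fl_exp y = E" using a by blast
  have "fl_val y = of_int z / 2 ^ E" using a by blast
  hence "of_int (iv y) / (2::rat) ^ E = of_int z / 2 ^ E" using e fl_val_iv[of y] by argo
  hence "of_int (iv y) = (of_int z :: rat)" by (simp add: divide_cancel_right)
  hence "iv y = z" by simp
  thus "y = canonI z E" using a e unfolding isCanon_def by metis
qed

definition mx :: "nat list \<Rightarrow> nat" where "mx xs = foldr max xs 0"
lemma mx_simps[simp]: "mx [] = 0" "mx (x # xs) = max x (mx xs)" by (simp_all add: mx_def)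

lemma mx_le_iff: "mx xs \<le> e \<longleftrightarrow> (\<forall>x\<in>set xs. x \<le> e)"
  by (induction xs) auto

lemma mx_ge: "x \<in> set xs \<Longrightarrow> x \<le> mx xs"
  by (induction xs) auto
lemma mx_in: "mx xs = 0 \<or> mx xs \<in> set xs"
  by (induction xs) (auto simp: max_def)
lemma mx_eq_iff: "mx xs = e \<longleftrightarrow> (\<forall>x\<in>set xs. x \<le> e) \<and> (e = 0 \<or> e \<in> set xs)"
  using mx_ge[of _ xs] mx_in[of xs] mx_le_iff[of xs e] by (metis le_antisym le0)

definition wsG :: "fl list \<Rightarrow> fl \<times> fl list \<Rightarrow> fl list" where
  "wsG = (\<lambda>acc (a, v). vec_add acc (vec_scale a v))"

lemma foldl_ws:
  assumes "length acc = k" "\<forall>(a,v)\<in>set ps. length v = k"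
    "\<forall>c<k. \<exists>z. acc!c = canonI z (E0 c) \<and> of_int z / 2^E0 c = S0 c"
  shows "length (foldl wsG acc ps) = k \<and> (\<forall>c<k. \<exists>z.
     foldl wsG acc ps ! c = canonI z (max (E0 c) (mx (map (\<lambda>(a,v). fl_exp a + fl_exp (v!c)) ps)))
     \<and> of_int z / 2 ^ (max (E0 c) (mx (map (\<lambda>(a,v). fl_exp a + fl_exp (v!c)) ps)))
        = S0 c + (\<Sum>(a,v)\<leftarrow>ps. fl_val a * fl_val (v!c)))"
  using assms
proof (induction ps arbitrary: acc E0 S0)
  case Nil
  then show ?case by simp
next
  case (Cons p ps)
  obtain a v where p: "p = (a, v)" by (cases p)
  have lv: "length v = k" using Cons.prems p by auto
  define acc' where "acc' = wsG acc p"
  have l': "length acc' = k" using Cons.prems lv by (simp add: acc'_def wsG_def p vec_add_def vec_scale_def)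
  define E1 where "E1 = (\<lambda>c. max (E0 c) (fl_exp a + fl_exp (v!c)))"
  define S1 where "S1 = (\<lambda>c. S0 c + fl_val a * fl_val (v!c))"
  have a': "\<forall>c<k. \<exists>z. acc'!c = canonI z (E1 c) \<and> of_int z / 2^E1 c = S1 c"
  proof (intro allI impI)
    fix c assume c: "c < k"
    obtain z where z: "acc!c = canonI z (E0 c)" "of_int z / 2^E0 c = S0 c" using Cons.prems(3) c by blast
    have ac: "acc'!c = fl_add (acc!c) (fl_mul a (v!c))"
      using c Cons.prems lv by (simp add: acc'_def wsG_def p vec_add_def vec_scale_def)
    let ?e = "fl_exp a + fl_exp (v!c)"
    let ?z = "z * 2 ^ (E1 c - E0 c) + iv a * iv (v!c) * 2 ^ (E1 c - ?e)"
    have "acc'!c = canonI ?z (E1 c)"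
      unfolding ac fl_add_canon using z by (simp add: E1_def)
    moreover have "of_int ?z / (2::rat) ^ E1 c = S1 c"
    proof -
      have "of_int ?z / (2::rat) ^ E1 c = (of_int z * 2 ^ (E1 c - E0 c)) / 2 ^ E1 c
          + (of_int (iv a * iv (v!c)) * 2 ^ (E1 c - ?e)) / 2 ^ E1 c"
        by (simp add: add_divide_distrib)
      also have "\<dots> = of_int z / 2 ^ E0 c + of_int (iv a * iv (v!c)) / 2 ^ ?e"
        by (subst scale_pow, simp add: E1_def, subst scale_pow, simp add: E1_def, rule refl)
      also have "\<dots> = S1 c" using z by (simp add: S1_def fl_val_iv power_add)
      finally show ?thesis .
    qed
    ultimately show "\<exists>z. acc'!c = canonI z (E1 c) \<and> of_int z / 2^E1 c = S1 c" by blast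
  qed
  have IH: "length (foldl wsG acc' ps) = k \<and> (\<forall>c<k. \<exists>z.
     foldl wsG acc' ps ! c = canonI z (max (E1 c) (mx (map (\<lambda>(a,v). fl_exp a + fl_exp (v!c)) ps)))
     \<and> of_int z / 2 ^ (max (E1 c) (mx (map (\<lambda>(a,v). fl_exp a + fl_exp (v!c)) ps)))
        = S1 c + (\<Sum>(a,v)\<leftarrow>ps. fl_val a * fl_val (v!c)))"
    using Cons.IH[OF l' _ a'] Cons.prems(2) by auto
  show ?case using IH by (simp add: acc'_def p E1_def S1_def max.assoc add.assoc)
qed


section \<open>Circuit library\<close>

definition cT :: circ where "cT = AndG []"
definition cF :: circ where "cF = OrG []"
definition cc :: "bool \<Rightarrow> circ" where "cc b = (if b then cT else cF)"
definition cNot :: "circ \<Rightarrow> circ" where "cNot C = ThrLe 0 [C]"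

lemma ev_And[simp]: "ceval x (AndG cs) \<longleftrightarrow> (\<forall>c\<in>set cs. ceval x c)"
  by (simp add: list_all_iff)
lemma ev_Or[simp]: "ceval x (OrG cs) \<longleftrightarrow> (\<exists>c\<in>set cs. ceval x c)"
  by (simp add: list_ex_iff)
lemma ev_cc[simp]: "ceval x (cc b) = b" by (simp add: cc_def cT_def cF_def)
lemma ev_cNot[simp]: "ceval x (cNot C) = (\<not> ceval x C)" by (simp add: cNot_def)

definition cnt :: "bool list \<Rightarrow> circ list \<Rightarrow> nat" where
  "cnt x cs = length (filter id (map (ceval x) cs))"
lemma ev_ThrGe: "ceval x (ThrGe t cs) \<longleftrightarrow> cnt x cs \<ge> t" by (simp add: cnt_def)
lemma ev_ThrLe: "ceval x (ThrLe t cs) \<longleftrightarrow> cnt x cs \<le> t" by (simp add: cnt_def)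
lemma cnt_append[simp]: "cnt x (xs @ ys) = cnt x xs + cnt x ys" by (simp add: cnt_def)
lemma cnt_Nil[simp]: "cnt x [] = 0" by (simp add: cnt_def)
lemma cnt_Cons[simp]: "cnt x (c # cs) = (if ceval x c then 1 else 0) + cnt x cs" by (simp add: cnt_def)
lemma cnt_replicate[simp]: "cnt x (replicate m c) = (if ceval x c then m else 0)"
  by (induction m) auto

definition wlist :: "(int \<times> circ) list \<Rightarrow> circ list" where
  "wlist ps = concat (map (\<lambda>(a,C). if 0 \<le> a then replicate (nat a) C else replicate (nat (-a)) (cNot C)) ps)"
definition negs :: "(int \<times> circ) list \<Rightarrow> int" where
  "negs ps = (\<Sum>(a,C)\<leftarrow>ps. if a < 0 then -a else 0)"
definition wsum :: "bool list \<Rightarrow> (int \<times> circ) list \<Rightarrow> int" where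
  "wsum x ps = (\<Sum>(a,C)\<leftarrow>ps. if ceval x C then a else 0)"

lemma cnt_wlist: "int (cnt x (wlist ps)) = wsum x ps + negs ps"
  by (induction ps) (auto simp: wlist_def negs_def wsum_def)

definition cW :: "(int \<times> circ) list \<Rightarrow> int \<Rightarrow> circ" where
  "cW ps T = ThrGe (nat (T + negs ps)) (wlist ps)"

lemma ev_cW: "ceval x (cW ps T) \<longleftrightarrow> wsum x ps \<ge> T"
  unfolding cW_def ev_ThrGe using cnt_wlist[of x ps] by (simp add: nat_le_iff)

definition cWeq :: "(int \<times> circ) list \<Rightarrow> int \<Rightarrow> circ" where
  "cWeq ps T = AndG [cW ps T, cW (map (\<lambda>(a,C). (-a,C)) ps) (-T)]"

lemma wsum_neg: "wsum x (map (\<lambda>(a,C). (-a,C)) ps) = - wsum x ps"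
  by (induction ps) (auto simp: wsum_def)

lemma ev_cWeq: "ceval x (cWeq ps T) \<longleftrightarrow> wsum x ps = T"
  by (auto simp: cWeq_def ev_cW wsum_neg)

lemma fold_max_eq: "fold max xs (a::nat) = Max (insert a (set xs))"
  by (metis Max.set_eq_fold list.simps(15))
lemma fold_max_le: "a \<le> D \<Longrightarrow> (\<forall>x\<in>set xs. x \<le> D) \<Longrightarrow> fold max xs a \<le> (D::nat)"
  by (simp add: fold_max_eq)
lemma fold_max_ge: "x \<in> set xs \<Longrightarrow> x \<le> fold max xs (a::nat)"
  by (simp add: fold_max_eq)

lemma dep_gate:
  assumes "\<forall>c\<in>set cs. cdepth c \<le> D"
  shows "cdepth (AndG cs) \<le> Suc D" "cdepth (OrG cs) \<le> Suc D"
    "cdepth (ThrGe t cs) \<le> Suc D" "cdepth (ThrLe t cs) \<le> Suc D"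
  using fold_max_le[of 0 D "map cdepth cs"] assms by auto

lemma dep_cc: "cdepth (cc b) \<le> Suc D" by (simp add: cc_def cT_def cF_def)
lemma dep_cNot: "cdepth C \<le> D \<Longrightarrow> cdepth (cNot C) \<le> Suc D"
  unfolding cNot_def by (rule dep_gate) auto

lemma dep_wlist: "\<forall>(a,C)\<in>set ps. cdepth C \<le> D \<Longrightarrow> \<forall>c\<in>set (wlist ps). cdepth c \<le> Suc D"
  by (auto simp: wlist_def split: if_splits intro: dep_cNot le_SucI)

lemma dep_cW: "\<forall>(a,C)\<in>set ps. cdepth C \<le> D \<Longrightarrow> cdepth (cW ps T) \<le> Suc (Suc D)"
  unfolding cW_def by (rule dep_gate) (rule dep_wlist)

lemma dep_cWeq: "\<forall>(a,C)\<in>set ps. cdepth C \<le> D \<Longrightarrow> cdepth (cWeq ps T) \<le> Suc (Suc (Suc D))"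
  unfolding cWeq_def by (rule dep_gate) (auto intro!: dep_cW)

section \<open>fan-in and size\<close>

fun fb :: "nat \<Rightarrow> circ \<Rightarrow> bool" where
  "fb F (Inp i b) = True"
| "fb F (AndG cs) = (length cs \<le> F \<and> (\<forall>c\<in>set cs. fb F c))"
| "fb F (OrG cs) = (length cs \<le> F \<and> (\<forall>c\<in>set cs. fb F c))"
| "fb F (ThrGe t cs) = (length cs \<le> F \<and> (\<forall>c\<in>set cs. fb F c))"
| "fb F (ThrLe t cs) = (length cs \<le> F \<and> (\<forall>c\<in>set cs. fb F c))"

lemma sum_list_le_len: "(\<forall>x\<in>set xs. x \<le> B) \<Longrightarrow> sum_list xs \<le> length xs * (B::nat)"
  by (induction xs) auto

lemma gate_size:
  assumes "length cs \<le> F" "\<forall>c\<in>set cs. csize c \<le> (F+1) ^ cdepth c"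
  shows "1 + sum_list (map csize cs) \<le> (F+1) ^ (1 + fold max (map cdepth cs) 0)"
proof -
  let ?D = "fold max (map cdepth cs) 0"
  have "\<forall>x\<in>set (map csize cs). x \<le> (F+1) ^ ?D"
  proof
    fix x assume "x \<in> set (map csize cs)"
    then obtain c where c: "c \<in> set cs" "x = csize c" by auto
    have "cdepth c \<le> ?D" using fold_max_ge[of "cdepth c"] c by auto
    hence "(F+1) ^ cdepth c \<le> (F+1) ^ ?D" by (rule power_increasing) simp
    thus "x \<le> (F+1) ^ ?D" using c assms by fastforce
  qed
  hence "sum_list (map csize cs) \<le> length cs * (F+1) ^ ?D" using sum_list_le_len by fastforce
  also have "\<dots> \<le> F * (F+1) ^ ?D" using assms by simp
  finally have "1 + sum_list (map csize cs) \<le> 1 + F * (F+1) ^ ?D" by simp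
  also have "\<dots> \<le> (F+1) ^ ?D + F * (F+1) ^ ?D" by simp
  also have "\<dots> = (F+1) ^ (1 + ?D)" by simp
  finally show ?thesis .
qed

lemma fb_size: "fb F C \<Longrightarrow> csize C \<le> (F+1) ^ cdepth C"
proof (induction C)
  case (AndG cs) thus ?case using gate_size[of cs F] by simp
next
  case (OrG cs) thus ?case using gate_size[of cs F] by simp
next
  case (ThrGe t cs) thus ?case using gate_size[of cs F] by simp
next
  case (ThrLe t cs) thus ?case using gate_size[of cs F] by simp
qed simp

lemma fb_mono: "fb F C \<Longrightarrow> F \<le> G \<Longrightarrow> fb G C"
  by (induction C) auto

lemma fb_cc: "fb F (cc b)" by (simp add: cc_def cT_def cF_def)
lemma fb_cNot: "fb F C \<Longrightarrow> 1 \<le> F \<Longrightarrow> fb F (cNot C)" by (simp add: cNot_def)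

lemma len_wlist: "length (wlist ps) = (\<Sum>(a,C)\<leftarrow>ps. nat \<bar>a\<bar>)"
  by (induction ps) (auto simp: wlist_def)

lemma fb_cW: "\<forall>(a,C)\<in>set ps. fb F C \<Longrightarrow> 1 \<le> F \<Longrightarrow> (\<Sum>(a,C)\<leftarrow>ps. nat \<bar>a\<bar>) \<le> F \<Longrightarrow> fb F (cW ps T)"
proof -
  assume a: "\<forall>(a,C)\<in>set ps. fb F C" "1 \<le> F" "(\<Sum>(a,C)\<leftarrow>ps. nat \<bar>a\<bar>) \<le> F"
  have "\<forall>c\<in>set (wlist ps). fb F c" using a(1,2) by (auto simp: wlist_def split: if_splits intro: fb_cNot)
  thus ?thesis using a(3) len_wlist[of ps] by (simp add: cW_def)
qed

lemma fb_cWeq: "\<forall>(a,C)\<in>set ps. fb F C \<Longrightarrow> 2 \<le> F \<Longrightarrow> (\<Sum>(a,C)\<leftarrow>ps. nat \<bar>a\<bar>) \<le> F \<Longrightarrow> fb F (cWeq ps T)"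
proof -
  assume a: "\<forall>(a,C)\<in>set ps. fb F C" "2 \<le> F" "(\<Sum>(a,C)\<leftarrow>ps. nat \<bar>a\<bar>) \<le> F"
  have "(\<Sum>(a,C)\<leftarrow>map (\<lambda>(a,C). (-a,C)) ps. nat \<bar>a\<bar>) = (\<Sum>(a,C)\<leftarrow>ps. nat \<bar>a\<bar>)"
    by (induction ps) auto
  thus ?thesis using a by (auto simp: cWeq_def intro!: fb_cW)
qed


lemma zip_nth_map: "length xs = length ys \<Longrightarrow> zip xs ys = map (\<lambda>j. (xs!j, ys!j)) [0..<length ys]"
  by (rule nth_equalityI) auto

lemma ws_char:
  assumes "length ws = length vs" "\<forall>v\<in>set vs. length v = k"
  shows "length (weighted_sum k ws vs) = k \<and> (\<forall>c<k. \<exists>z.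
     weighted_sum k ws vs ! c = canonI z (mx (map (\<lambda>j. fl_exp (ws!j) + fl_exp (vs!j!c)) [0..<length vs]))
     \<and> of_int z / 2 ^ (mx (map (\<lambda>j. fl_exp (ws!j) + fl_exp (vs!j!c)) [0..<length vs]))
        = (\<Sum>j\<leftarrow>[0..<length vs]. fl_val (ws!j) * fl_val (vs!j!c)))"
proof -
  have wz: "weighted_sum k ws vs = foldl wsG (replicate k fl_zero) (zip ws vs)"
    by (simp add: weighted_sum_def wsG_def)
  have z0: "fl_zero = canonI 0 0" by (simp add: fl_zero_def canonI_def)
  have "\<forall>(a,v)\<in>set (zip ws vs). length v = k" using assms(2) by (auto dest: set_zip_rightD)
  from foldl_ws[OF _ this, of "replicate k fl_zero" "\<lambda>_. 0" "\<lambda>_. 0"]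
  have "length (foldl wsG (replicate k fl_zero) (zip ws vs)) = k \<and> (\<forall>c<k. \<exists>z.
     foldl wsG (replicate k fl_zero) (zip ws vs) ! c = canonI z (max 0 (mx (map (\<lambda>(a,v). fl_exp a + fl_exp (v!c)) (zip ws vs))))
     \<and> of_int z / 2 ^ (max 0 (mx (map (\<lambda>(a,v). fl_exp a + fl_exp (v!c)) (zip ws vs))))
        = 0 + (\<Sum>(a,v)\<leftarrow>(zip ws vs). fl_val a * fl_val (v!c)))"
    by (simp add: z0)
  thus ?thesis unfolding wz zip_nth_map[OF assms(1)] by (simp add: comp_def)
qed

locale tf =
  fixes k :: nat and H :: nat and \<phi> :: "'a::finite \<Rightarrow> nat \<Rightarrow> fl list"
    and s :: "nat \<Rightarrow> nat \<Rightarrow> fl list \<Rightarrow> fl list \<Rightarrow> fl" and f :: "nat \<Rightarrow> fl list list \<Rightarrow> fl list"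
    and nL :: nat
  assumes phi_len: "\<And>\<sigma> i. length (\<phi> \<sigma> i) = k"
    and emb: "emb_size_preserving \<phi>"
    and act_len: "\<And>l xs. l \<in> {1..nL} \<Longrightarrow> xs \<in> act_domain k H \<Longrightarrow> length (f l xs) = k"
    and act_sp: "\<And>l. l \<in> {1..nL} \<Longrightarrow> act_size_preserving k H (f l)"
begin

definition run :: "'a list \<Rightarrow> nat \<Rightarrow> fl list list" where
  "run w l = tf_run k H \<phi> s f w l"

definition bsum :: "'a list \<Rightarrow> nat \<Rightarrow> nat \<Rightarrow> fl list \<Rightarrow> fl list" where
  "bsum w l h x = weighted_sum k (sat_attn (map (s l h x) (run w l))) (run w l)"

lemma run_len[simp]: "length (run w l) = length w"
  by (induction l) (auto simp: run_def tf_layer_def not_less_eq_eq)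

lemma run0_nth: "i < length w \<Longrightarrow> run w 0 ! i = \<phi> (w!i) (Suc i)"
  by (simp add: run_def nth_upt del: upt_Suc)

lemma runS_nth: "i < length w \<Longrightarrow>
   run w (Suc l) ! i = f (Suc l) (run w l ! i # map (\<lambda>h. bsum w l h (run w l ! i)) [0..<H])"
  using run_len[of w l] by (simp add: run_def tf_layer_def bsum_def)

definition gs :: "nat \<Rightarrow> nat \<Rightarrow> fl list \<Rightarrow> fl list \<Rightarrow> rat" where
  "gs l h x t = fl_val (s l h x t)"

definition mval :: "'a list \<Rightarrow> nat \<Rightarrow> nat \<Rightarrow> fl list \<Rightarrow> rat" where
  "mval w l h x = Max (gs l h x ` set (run w l))"

definition Mcnt :: "'a list \<Rightarrow> nat \<Rightarrow> nat \<Rightarrow> fl list \<Rightarrow> nat" where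
  "Mcnt w l h x = card {j. j < length w \<and> gs l h x (run w l ! j) = mval w l h x}"

definition Eb :: "'a list \<Rightarrow> nat \<Rightarrow> nat \<Rightarrow> fl list \<Rightarrow> nat \<Rightarrow> nat" where
  "Eb w l h x c = mx (map (\<lambda>j. (if gs l h x (run w l ! j) = mval w l h x then Defs.bitlen (Mcnt w l h x) else 0)
      + fl_exp (run w l ! j ! c)) [0..<length w])"

definition Sb :: "'a list \<Rightarrow> nat \<Rightarrow> nat \<Rightarrow> fl list \<Rightarrow> nat \<Rightarrow> rat" where
  "Sb w l h x c = fl_val (fl_inv_nat (Mcnt w l h x)) *
     (\<Sum>j\<leftarrow>[0..<length w]. if gs l h x (run w l ! j) = mval w l h x then fl_val (run w l ! j ! c) else 0)"

lemma sat_attn_nth: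
  assumes "j < length a"
  shows "sat_attn a ! j = (if fl_val (a!j) = Max (set (map fl_val a))
     then fl_inv_nat (card {i. i < length a \<and> fl_val (a ! i) = Max (set (map fl_val a))}) else fl_zero)"
  using assms by (simp add: sat_attn_def Let_def)

lemma bsum_char0:
  assumes "\<forall>v\<in>set (run w l). length v = k"
  shows "length (bsum w l h x) = k \<and> (\<forall>c<k. \<exists>z. bsum w l h x ! c = canonI z (Eb w l h x c)
      \<and> of_int z / 2 ^ Eb w l h x c = Sb w l h x c)"
proof -
  let ?a = "map (s l h x) (run w l)"
  let ?ws = "sat_attn ?a"
  have la: "length ?ws = length (run w l)" by (simp add: sat_attn_def Let_def)
  have mv: "Max (set (map fl_val ?a)) = mval w l h x"
    by (simp add: mval_def gs_def image_image)
  have mc: "card {i. i < length ?a \<and> fl_val (?a ! i) = Max (set (map fl_val ?a))} = Mcnt w l h x"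
    unfolding mv Mcnt_def gs_def by (auto intro!: arg_cong[where f=card])
  have wsj: "\<And>j. j < length w \<Longrightarrow> ?ws ! j = (if gs l h x (run w l ! j) = mval w l h x
      then fl_inv_nat (Mcnt w l h x) else fl_zero)"
    using sat_attn_nth[of _ ?a] mv mc by (simp add: gs_def)
  have e: "\<And>c. mx (map (\<lambda>j. fl_exp (?ws!j) + fl_exp (run w l!j!c)) [0..<length (run w l)]) = Eb w l h x c"
    unfolding Eb_def by (rule arg_cong[where f=mx], rule map_cong) (auto simp: wsj fl_inv_nat_def fl_zero_def)
  have sm: "\<And>c. (\<Sum>j\<leftarrow>[0..<length (run w l)]. fl_val (?ws!j) * fl_val (run w l!j!c)) = Sb w l h x c"
    unfolding Sb_def sum_list_const_mult[symmetric]
    by (rule arg_cong[where f=sum_list], rule map_cong) (auto simp: wsj fl_zero_def fl_val_def)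
  show ?thesis using ws_char[OF la assms] unfolding bsum_def e sm by simp
qed

lemma run_nth_len: "l \<le> nL \<Longrightarrow> i < length w \<Longrightarrow> length (run w l ! i) = k"
proof (induction l arbitrary: i)
  case 0 thus ?case by (simp add: run0_nth phi_len)
next
  case (Suc l)
  have all: "\<forall>v\<in>set (run w l). length v = k" using Suc by (auto simp: in_set_conv_nth)
  have "run w l ! i # map (\<lambda>h. bsum w l h (run w l ! i)) [0..<H] \<in> act_domain k H"
    using Suc bsum_char0[OF all] by (auto simp: act_domain_def)
  thus ?case using Suc act_len[of "Suc l"] by (simp add: runS_nth)
qed

lemma run_all_len: "l \<le> nL \<Longrightarrow> \<forall>v\<in>set (run w l). length v = k"
  using run_nth_len by (auto simp: in_set_conv_nth)

lemma bsum_char: "l \<le> nL \<Longrightarrow> length (bsum w l h x) = k \<and> (\<forall>c<k. \<exists>z. bsum w l h x ! c = canonI z (Eb w l h x c)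
      \<and> of_int z / 2 ^ Eb w l h x c = Sb w l h x c)"
  using bsum_char0 run_all_len by blast

lemma bsum_eq_iff:
  assumes "l \<le> nL"
  shows "bsum w l h x = y \<longleftrightarrow> length y = k \<and> (\<forall>c<k. isCanon (y!c) \<and> fl_exp (y!c) = Eb w l h x c
      \<and> fl_val (y!c) = Sb w l h x c)"
proof -
  note bc = bsum_char[OF assms, of w h x]
  show ?thesis
  proof
    assume "bsum w l h x = y" thus "length y = k \<and> (\<forall>c<k. isCanon (y!c) \<and> fl_exp (y!c) = Eb w l h x c
      \<and> fl_val (y!c) = Sb w l h x c)" using bc canon_eq_iff by metis
  next
    assume a: "length y = k \<and> (\<forall>c<k. isCanon (y!c) \<and> fl_exp (y!c) = Eb w l h x c
      \<and> fl_val (y!c) = Sb w l h x c)"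
    show "bsum w l h x = y"
    proof (rule nth_equalityI)
      show "length (bsum w l h x) = length y" using a bc by simp
      fix c assume "c < length (bsum w l h x)"
      hence c: "c < k" using bc by simp
      then obtain z where z: "bsum w l h x ! c = canonI z (Eb w l h x c)" "of_int z / 2 ^ Eb w l h x c = Sb w l h x c"
        using bc by blast
      have "y ! c = canonI z (Eb w l h x c)" using a c z(2) canon_eq_iff by metis
      thus "bsum w l h x ! c = y ! c" using z by simp
    qed
  qed
qed

end

lemma fl_size_alt: "fl_size x = 2 + Defs.bitlen (fl_num x) + fl_exp x"
  by (simp add: fl_size_def bl_pow)
lemma num_lt: "fl_num x < 2 ^ fl_size x"
proof -
  have "fl_num x < 2 ^ Defs.bitlen (fl_num x)" by (rule bl_less)
  also have "\<dots> \<le> 2 ^ fl_size x" by (rule power_increasing) (auto simp: fl_size_alt)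
  finally show ?thesis .
qed
lemma exp_lt: "fl_exp x < fl_size x" by (simp add: fl_size_alt)

lemma abs_val_le: "\<bar>fl_val x\<bar> \<le> 2 ^ fl_size x"
proof -
  have "\<bar>fl_val x\<bar> = of_nat (fl_num x) / 2 ^ fl_exp x" by (simp add: fl_val_def abs_mult)
  also have "\<dots> \<le> of_nat (fl_num x)" by (simp add: divide_le_eq_1 field_simps)
     (metis le_add_same_cancel1 mult_right_mono of_nat_0_le_iff one_le_power one_le_numeral zero_le_numeral mult.commute mult_1 order_trans)
  also have "\<dots> \<le> 2 ^ fl_size x" using num_lt[of x]
    by (metis less_imp_le of_nat_le_iff of_nat_numeral of_nat_power)
  finally show ?thesis .
qed

lemma vec_size_elt: "c < length v \<Longrightarrow> fl_size (v ! c) \<le> vec_size v"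
  unfolding vec_size_def by (rule member_le_sum_list) auto

lemma vec_size_elt': "x \<in> set v \<Longrightarrow> fl_size x \<le> vec_size v"
  unfolding vec_size_def by (rule member_le_sum_list) auto

lemma vecs_size_elt': "x \<in> set v \<Longrightarrow> vec_size x \<le> vecs_size v"
  unfolding vecs_size_def by (rule member_le_sum_list) auto

lemma sum_abs_bound: "(\<forall>x\<in>set xs. \<bar>g x\<bar> \<le> B) \<Longrightarrow> \<bar>sum_list (map g xs)\<bar> \<le> of_nat (length xs) * (B::rat)"
proof (induction xs)
  case (Cons a xs)
  have "\<bar>sum_list (map g (a # xs))\<bar> \<le> \<bar>g a\<bar> + \<bar>sum_list (map g xs)\<bar>" by (simp add: abs_triangle_ineq)
  also have "\<dots> \<le> B + of_nat (length xs) * B" using Cons by (intro add_mono) auto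
  finally show ?case by (simp add: algebra_simps)
qed simp

lemma inv_le1: "0 \<le> fl_val (fl_inv_nat M) \<and> fl_val (fl_inv_nat M) \<le> 1"
proof -
  have "2 ^ Defs.bitlen M div M \<le> 2 ^ Defs.bitlen M" by (rule div_le_dividend)
  hence "(of_nat (2 ^ Defs.bitlen M div M) :: rat) \<le> 2 ^ Defs.bitlen M"
    by (metis of_nat_le_iff of_nat_numeral of_nat_power)
  thus ?thesis by (simp add: fl_val_def fl_inv_nat_def)
qed

lemma bitlen_bound: "m \<le> 2 ^ K \<Longrightarrow> Defs.bitlen m \<le> Suc K"
proof -
  assume "m \<le> 2 ^ K"
  moreover have "(2::nat) ^ K < 2 ^ Suc K" by simp
  ultimately have "m < 2 ^ Suc K" by linarith
  thus ?thesis using bl_le_iff[of "Suc K" m] by simp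
qed

lemma fl_size_canon: "fl_size (canonI z E) = 2 + Defs.bitlen (nat \<bar>z\<bar>) + E"
  by (simp add: fl_size_alt canonI_def)

lemma sum_list_le_len2: "(\<forall>x\<in>set xs. g x \<le> B) \<Longrightarrow> sum_list (map g xs) \<le> length xs * (B::nat)"
  by (induction xs) auto

context tf begin

lemma Mcnt_le: "Mcnt w l h x \<le> length w"
proof -
  have "{j. j < length w \<and> gs l h x (run w l ! j) = mval w l h x} \<subseteq> {..<length w}" by auto
  from card_mono[OF _ this] show ?thesis by (simp add: Mcnt_def)
qed

lemma bsum_size:
  assumes l: "l \<le> nL" and bd: "\<forall>j<length w. vec_size (run w l ! j) \<le> A * Defs.bitlen (length w)"
  shows "vec_size (bsum w l h x) \<le> k * ((6 + 3 * A) * Defs.bitlen (length w))"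
proof -
  define \<beta> where "\<beta> = Defs.bitlen (length w)"
  have b1: "\<beta> \<ge> 1" unfolding \<beta>_def by (rule bl_ge1)
  note bc = bsum_char[OF l, of w h x]
  have cb: "fl_size (bsum w l h x ! c) \<le> (6 + 3 * A) * \<beta>" if c: "c < k" for c
  proof -
    obtain z where z: "bsum w l h x ! c = canonI z (Eb w l h x c)" "of_int z / 2 ^ Eb w l h x c = Sb w l h x c"
      using bc c by blast
    define E where "E = Eb w l h x c"
    have fs: "\<forall>j<length w. fl_size (run w l ! j ! c) \<le> A * \<beta>"
    proof (intro allI impI)
      fix j assume j: "j < length w"
      have "fl_size (run w l ! j ! c) \<le> vec_size (run w l ! j)"
        using vec_size_elt run_nth_len[OF l j] c by simp
      thus "fl_size (run w l ! j ! c) \<le> A * \<beta>" using bd j \<beta>_def by fastforce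
    qed
    have Eb: "E \<le> \<beta> + A * \<beta>"
      unfolding E_def Eb_def mx_le_iff
    proof
      fix e assume "e \<in> set (map (\<lambda>j. (if gs l h x (run w l ! j) = mval w l h x then Defs.bitlen (Mcnt w l h x) else 0)
      + fl_exp (run w l ! j ! c)) [0..<length w])"
      then obtain j where j: "j < length w" and e: "e = (if gs l h x (run w l ! j) = mval w l h x then Defs.bitlen (Mcnt w l h x) else 0)
      + fl_exp (run w l ! j ! c)" by auto
      have "Defs.bitlen (Mcnt w l h x) \<le> \<beta>" unfolding \<beta>_def by (rule bl_mono[OF Mcnt_le])
      moreover have "fl_exp (run w l ! j ! c) \<le> A * \<beta>" using exp_lt[of "run w l ! j ! c"] fs j by fastforce
      ultimately show "e \<le> \<beta> + A * \<beta>" using e by auto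
    qed
    have Sb: "\<bar>Sb w l h x c\<bar> \<le> of_nat (length w) * 2 ^ (A * \<beta>)"
    proof -
      let ?q = "fl_val (fl_inv_nat (Mcnt w l h x))"
      let ?S = "(\<Sum>j\<leftarrow>[0..<length w]. if gs l h x (run w l ! j) = mval w l h x then fl_val (run w l ! j ! c) else 0)"
      have "\<bar>?S\<bar> \<le> of_nat (length [0..<length w]) * 2 ^ (A * \<beta>)"
      proof (rule sum_abs_bound, rule)
        fix j assume "j \<in> set [0..<length w]"
        hence j: "j < length w" by simp
        have "\<bar>fl_val (run w l ! j ! c)\<bar> \<le> 2 ^ fl_size (run w l ! j ! c)" by (rule abs_val_le)
        also have "\<dots> \<le> 2 ^ (A * \<beta>)" by (rule power_increasing) (use fs j in auto)
        finally show "\<bar>if gs l h x (run w l ! j) = mval w l h x then fl_val (run w l ! j ! c) else 0\<bar> \<le> 2 ^ (A * \<beta>)"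
          by auto
      qed
      hence "\<bar>?S\<bar> \<le> of_nat (length w) * 2 ^ (A * \<beta>)" by simp
      moreover have "\<bar>Sb w l h x c\<bar> = ?q * \<bar>?S\<bar>" using inv_le1[of "Mcnt w l h x"]
        by (simp add: Sb_def abs_mult)
      moreover have "?q * \<bar>?S\<bar> \<le> \<bar>?S\<bar>" using inv_le1[of "Mcnt w l h x"]
        by (intro mult_left_le_one_le) auto
      ultimately show ?thesis by linarith
    qed
    have nw: "of_nat (length w) \<le> (2::rat) ^ \<beta>"
      using bl_less[of "length w"] unfolding \<beta>_def
      by (metis less_imp_le of_nat_le_iff of_nat_numeral of_nat_power)
    have "of_int \<bar>z\<bar> = \<bar>Sb w l h x c\<bar> * (2::rat) ^ E"
      using z(2) unfolding E_def[symmetric] by (simp add: field_simps abs_mult)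
    also have "\<dots> \<le> (2 ^ \<beta> * 2 ^ (A * \<beta>)) * 2 ^ E"
      using Sb nw by (intro mult_right_mono) (auto intro: order_trans mult_right_mono)
    also have "\<dots> = 2 ^ (\<beta> + A * \<beta> + E)" by (simp add: power_add)
    finally have "of_int \<bar>z\<bar> \<le> (2::rat) ^ (\<beta> + A * \<beta> + E)" .
    hence "nat \<bar>z\<bar> \<le> 2 ^ (\<beta> + A * \<beta> + E)"
      by (metis nat_le_iff of_int_le_iff of_int_numeral of_int_power of_nat_numeral of_nat_power)
    hence "Defs.bitlen (nat \<bar>z\<bar>) \<le> Suc (\<beta> + A * \<beta> + E)" by (rule bitlen_bound)
    hence "fl_size (bsum w l h x ! c) \<le> 3 + \<beta> + A * \<beta> + 2 * E"
      using z(1) fl_size_canon[of z E] unfolding E_def by simp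
    also have "\<dots> \<le> (6 + 3 * A) * \<beta>" using Eb b1 by (simp add: algebra_simps)
    finally show ?thesis .
  qed
  have "vec_size (bsum w l h x) \<le> length (bsum w l h x) * ((6 + 3 * A) * \<beta>)"
    unfolding vec_size_def
    by (rule sum_list_le_len2) (use cb bc in \<open>auto simp: in_set_conv_nth\<close>)
  thus ?thesis using bc \<beta>_def by simp
qed

end

definition FLe :: "nat \<Rightarrow> fl set" where "FLe B = {x. fl_size x \<le> B}"

lemma FLe_sub: "FLe B \<subseteq> (\<lambda>(sg,p,e). Fl sg p e) ` (UNIV \<times> {..<2^B} \<times> {..<B})"
proof
  fix x assume "x \<in> FLe B"
  hence a: "fl_size x \<le> B" by (simp add: FLe_def)
  have "(2::nat) ^ fl_size x \<le> 2 ^ B" by (rule power_increasing[OF a]) simp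
  hence "fl_num x < 2 ^ B" using num_lt[of x] by linarith
  moreover have "fl_exp x < B" using exp_lt[of x] a by simp
  ultimately show "x \<in> (\<lambda>(sg,p,e). Fl sg p e) ` (UNIV \<times> {..<2^B} \<times> {..<B})"
    by (intro image_eqI[of _ _ "(fl_sign x, fl_num x, fl_exp x)"]) (auto intro: fl.expand)
qed

lemma FLe_finite: "finite (FLe B)"
  by (rule finite_subset[OF FLe_sub]) auto

lemma FLe_card: "card (FLe B) \<le> 2 * 2 ^ B * B"
proof -
  have "card (FLe B) \<le> card ((\<lambda>(sg,p,e). Fl sg p e) ` (UNIV \<times> {..<(2::nat)^B} \<times> {..<B}))"
    by (rule card_mono[OF _ FLe_sub]) auto
  also have "\<dots> \<le> card (UNIV \<times> {..<(2::nat)^B} \<times> {..<B} :: (bool \<times> nat \<times> nat) set)"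
    by (rule card_image_le) auto
  also have "\<dots> = 2 * 2 ^ B * B" by (simp add: card_cartesian_product)
  finally show ?thesis .
qed

lemma FLe_card8: "card (FLe B) \<le> 8 ^ B"
proof (cases "B = 0")
  case True thus ?thesis using FLe_card[of B] by simp
next
  case False
  have "2 * 2 ^ B * B \<le> 2 ^ B * 2 ^ B * 2 ^ B"
  proof (intro mult_mono)
    show "(2::nat) \<le> 2 ^ B" using False by (simp add: self_le_power)
    show "B \<le> 2 ^ B" by (simp add: less_imp_le)
  qed auto
  also have "\<dots> = 8 ^ B" by (simp flip: power_mult_distrib)
  finally show ?thesis using FLe_card[of B] by linarith
qed

definition VS :: "nat \<Rightarrow> nat \<Rightarrow> fl list set" where
  "VS k B = {v. set v \<subseteq> FLe B \<and> length v = k}"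

lemma VS_finite: "finite (VS k B)"
  unfolding VS_def by (rule finite_lists_length_eq[OF FLe_finite])

lemma VS_card: "card (VS k B) \<le> 8 ^ (B * k)"
proof -
  have "card (VS k B) = card (FLe B) ^ k" unfolding VS_def by (rule card_lists_length_eq[OF FLe_finite])
  also have "\<dots> \<le> (8 ^ B) ^ k" by (rule power_mono[OF FLe_card8]) simp
  finally show ?thesis by (simp add: power_mult)
qed

lemma in_VS: "length v = k \<Longrightarrow> vec_size v \<le> B \<Longrightarrow> v \<in> VS k B"
  using vec_size_elt' by (force simp: VS_def FLe_def)

context tf begin

lemma level0_bound: "\<exists>A. \<forall>w. \<forall>i<length w. vec_size (run w 0 ! i) \<le> A * Defs.bitlen (length w)"
proof -
  obtain c N where cN: "\<forall>\<sigma> i. Defs.bitlen i \<ge> N \<longrightarrow> vec_size (\<phi> \<sigma> i) \<le> c * Defs.bitlen i"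
    using emb by (auto simp: emb_size_preserving_def)
  define C0 where "C0 = Max ((\<lambda>(\<sigma>,j). vec_size (\<phi> \<sigma> j)) ` (UNIV \<times> {..<(2::nat)^N}))"
  have "\<forall>w. \<forall>i<length w. vec_size (run w 0 ! i) \<le> (c + C0) * Defs.bitlen (length w)"
  proof (intro allI impI)
    fix w :: "'a list" and i assume i: "i < length w"
    have b1: "Defs.bitlen (length w) \<ge> 1" by (rule bl_ge1)
    have bm: "Defs.bitlen (Suc i) \<le> Defs.bitlen (length w)" using i by (intro bl_mono) simp
    show "vec_size (run w 0 ! i) \<le> (c + C0) * Defs.bitlen (length w)"
    proof (cases "N \<le> Defs.bitlen (Suc i)")
      case True
      hence "vec_size (run w 0 ! i) \<le> c * Defs.bitlen (Suc i)" using cN i by (simp add: run0_nth)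
      also have "\<dots> \<le> c * Defs.bitlen (length w)" using bm by simp
      finally show ?thesis by (simp add: add_mult_distrib)
    next
      case False
      have "Suc i < 2 ^ Defs.bitlen (Suc i)" by (rule bl_less)
      also have "\<dots> \<le> 2 ^ N" using False by (intro power_increasing) auto
      finally have "(w!i, Suc i) \<in> UNIV \<times> {..<(2::nat)^N}" by simp
      hence "vec_size (\<phi> (w!i) (Suc i)) \<le> C0" unfolding C0_def by (intro Max_ge) force+
      also have "\<dots> \<le> C0 * Defs.bitlen (length w)" using b1 by simp
      finally show ?thesis using i by (simp add: run0_nth add_mult_distrib)
    qed
  qed
  thus ?thesis by blast
qed

lemma act_finite: "finite {xs \<in> act_domain k H. vecs_size xs < N}"
proof (rule finite_subset)
  show "{xs \<in> act_domain k H. vecs_size xs < N} \<subseteq> {xs. set xs \<subseteq> VS k N \<and> length xs = H + 1}"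
  proof safe
    fix xs v assume a: "xs \<in> act_domain k H" "vecs_size xs < N" "v \<in> set xs"
    have "vec_size v \<le> N" using vecs_size_elt'[OF a(3)] a(2) by simp
    thus "v \<in> VS k N" using a by (intro in_VS) (auto simp: act_domain_def)
  qed (auto simp: act_domain_def)
  show "finite {xs. set xs \<subseteq> VS k N \<and> length xs = H + 1}"
    by (rule finite_lists_length_eq[OF VS_finite])
qed

lemma level_step:
  assumes l: "l < nL" and A: "\<forall>w. \<forall>i<length w. vec_size (run w l ! i) \<le> A * Defs.bitlen (length w)"
  shows "\<exists>A'. \<forall>w. \<forall>i<length w. vec_size (run w (Suc l) ! i) \<le> A' * Defs.bitlen (length w)"
proof -
  have l1: "Suc l \<in> {1..nL}" using l by simp
  obtain c N where cN: "\<forall>xs \<in> act_domain k H. vecs_size xs \<ge> N \<longrightarrow> vec_size (f (Suc l) xs) \<le> c * vecs_size xs"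
    using act_sp[OF l1] by (auto simp: act_size_preserving_def)
  define FS where "FS = {xs \<in> act_domain k H. vecs_size xs < N}"
  define C1 where "C1 = Max (vec_size ` f (Suc l) ` FS)"
  define B1 where "B1 = A + H * (k * (6 + 3 * A))"
  have fin: "finite FS" unfolding FS_def by (rule act_finite)
  have "\<forall>w. \<forall>i<length w. vec_size (run w (Suc l) ! i) \<le> (c * B1 + C1) * Defs.bitlen (length w)"
  proof (intro allI impI)
    fix w :: "'a list" and i assume i: "i < length w"
    define \<beta> where "\<beta> = Defs.bitlen (length w)"
    have b1: "\<beta> \<ge> 1" unfolding \<beta>_def by (rule bl_ge1)
    define xs where "xs = run w l ! i # map (\<lambda>h. bsum w l h (run w l ! i)) [0..<H]"
    have dom: "xs \<in> act_domain k H"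
      using run_nth_len[of l i w] l i bsum_char[of l w] by (auto simp: act_domain_def xs_def)
    have bs: "\<forall>h. vec_size (bsum w l h (run w l ! i)) \<le> k * ((6 + 3 * A) * \<beta>)"
      using bsum_size[of l w A] l A \<beta>_def by simp
    have "vecs_size xs = vec_size (run w l ! i) + (\<Sum>h\<leftarrow>[0..<H]. vec_size (bsum w l h (run w l ! i)))"
      by (simp add: vecs_size_def xs_def comp_def)
    also have "\<dots> \<le> A * \<beta> + H * (k * ((6 + 3 * A) * \<beta>))"
      using A i \<beta>_def sum_list_le_len2[of "[0..<H]" "\<lambda>h. vec_size (bsum w l h (run w l ! i))"] bs
      by (intro add_mono) auto
    also have "\<dots> = B1 * \<beta>" by (simp add: B1_def algebra_simps)
    finally have vx: "vecs_size xs \<le> B1 * \<beta>" .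
    have "vec_size (f (Suc l) xs) \<le> (c * B1 + C1) * \<beta>"
    proof (cases "N \<le> vecs_size xs")
      case True
      hence "vec_size (f (Suc l) xs) \<le> c * vecs_size xs" using cN dom by blast
      also have "\<dots> \<le> c * (B1 * \<beta>)" using vx by simp
      finally show ?thesis by (simp add: algebra_simps)
    next
      case False
      hence "xs \<in> FS" using dom by (simp add: FS_def)
      hence "vec_size (f (Suc l) xs) \<le> C1" unfolding C1_def using fin by (intro Max_ge) auto
      also have "\<dots> \<le> C1 * \<beta>" using b1 by simp
      finally show ?thesis by (simp add: algebra_simps)
    qed
    thus "vec_size (run w (Suc l) ! i) \<le> (c * B1 + C1) * Defs.bitlen (length w)"
      using i by (simp add: runS_nth xs_def \<beta>_def)
  qed
  thus ?thesis by blast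
qed

lemma level_bound: "l \<le> nL \<Longrightarrow> \<exists>A. \<forall>w. \<forall>i<length w. vec_size (run w l ! i) \<le> A * Defs.bitlen (length w)"
proof (induction l)
  case 0 show ?case by (rule level0_bound)
next
  case (Suc l)
  then obtain A where "\<forall>w. \<forall>i<length w. vec_size (run w l ! i) \<le> A * Defs.bitlen (length w)" by auto
  thus ?case using level_step Suc by simp
qed

lemma all_bound: "\<exists>A. \<forall>l\<le>nL. \<forall>w::'a list. \<forall>i<length w. vec_size (run w l ! i) \<le> A * Defs.bitlen (length w)
   \<and> (\<forall>h x. vec_size (bsum w l h x) \<le> A * Defs.bitlen (length w))"
proof -
  have "\<forall>l\<in>{..nL}. \<exists>A. \<forall>w. \<forall>i<length w. vec_size (run w l ! i) \<le> A * Defs.bitlen (length w)"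
    using level_bound by auto
  then obtain Af where Af: "\<forall>l\<in>{..nL}. \<forall>w. \<forall>i<length w. vec_size (run w l ! i) \<le> Af l * Defs.bitlen (length w)"
    by (metis bchoice)
  define A where "A = (\<Sum>l\<le>nL. Af l)"
  define A2 where "A2 = A + k * (6 + 3 * A)"
  have le: "l \<le> nL \<Longrightarrow> Af l \<le> A" for l unfolding A_def by (rule member_le_sum) auto
  have "\<forall>l\<le>nL. \<forall>w::'a list. \<forall>i<length w. vec_size (run w l ! i) \<le> A2 * Defs.bitlen (length w)
   \<and> (\<forall>h x. vec_size (bsum w l h x) \<le> A2 * Defs.bitlen (length w))"
  proof (intro allI impI conjI)
    fix l and w :: "'a list" and i assume l: "l \<le> nL" and i: "i < length w"
    have rA: "\<forall>j<length w. vec_size (run w l ! j) \<le> A * Defs.bitlen (length w)"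
    proof (intro allI impI)
      fix j assume "j < length w"
      hence "vec_size (run w l ! j) \<le> Af l * Defs.bitlen (length w)" using Af l by auto
      also have "\<dots> \<le> A * Defs.bitlen (length w)" using le[OF l] by simp
      finally show "vec_size (run w l ! j) \<le> A * Defs.bitlen (length w)" .
    qed
    show "vec_size (run w l ! i) \<le> A2 * Defs.bitlen (length w)"
      using rA i by (rule_tac order_trans[of _ "A * Defs.bitlen (length w)"]) (auto simp: A2_def algebra_simps)
    fix h x
    show "vec_size (bsum w l h x) \<le> A2 * Defs.bitlen (length w)"
      using bsum_size[OF l rA, of h x] by (simp add: A2_def algebra_simps)
  qed
  thus ?thesis by blast
qed

end

lemma alph_prop: "distinct (alph_list :: 'a::finite list) \<and> set (alph_list :: 'a list) = UNIV"
proof -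
  have "\<exists>xs::'a list. distinct xs \<and> set xs = UNIV" using finite_distinct_list[of "UNIV :: 'a set"] by auto
  thus ?thesis unfolding alph_list_def by (rule someI_ex)
qed

lemma len_one_hot[simp]: "length (one_hot (a::'a::finite)) = length (alph_list :: 'a list)"
  by (simp add: one_hot_def)

lemma encode_len: "length (encode_word (w :: 'a::finite list)) = length w * length (alph_list :: 'a list)"
  by (induction w) (auto simp: encode_word_def)

lemma encode_nth: "i < length w \<Longrightarrow> p < length (alph_list :: 'a::finite list) \<Longrightarrow>
   encode_word w ! (i * length (alph_list :: 'a list) + p) = (alph_list ! p = (w ! i :: 'a))"
proof (induction w arbitrary: i)
  case Nil thus ?case by simp
next
  case (Cons a w)
  have e: "encode_word (a # w) = one_hot a @ encode_word w" by (simp add: encode_word_def)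
  show ?case
  proof (cases i)
    case 0 thus ?thesis using Cons.prems by (simp add: e nth_append one_hot_def)
  next
    case (Suc i')
    have "encode_word (a # w) ! (i * length (alph_list :: 'a list) + p) = encode_word w ! (i' * length (alph_list :: 'a list) + p)"
      unfolding e Suc by (simp add: nth_append)
    thus ?thesis using Cons Suc by simp
  qed
qed

lemma sum_single: "distinct V \<Longrightarrow> a \<in> set V \<Longrightarrow> (\<Sum>t\<leftarrow>V. if a = t then g t else (0::'c::comm_monoid_add)) = g a"
  by (simp add: sum_list_distinct_conv_sum_set)

lemma prod_sum:
  fixes G :: "nat \<Rightarrow> 'b \<Rightarrow> 'c::comm_monoid_add"
  assumes "distinct V" "\<forall>j\<in>set js. vs j \<in> set V"
  shows "(\<Sum>p\<leftarrow>filter (\<lambda>p. P (snd p)) (List.product js V). if vs (fst p) = snd p then G (fst p) (snd p) else 0)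
     = (\<Sum>j\<leftarrow>js. if P (vs j) then G j (vs j) else 0)"
  using assms(2)
proof (induction js)
  case (Cons j js)
  have "(\<Sum>p\<leftarrow>filter (\<lambda>p. P (snd p)) (map (Pair j) V). if vs (fst p) = snd p then G (fst p) (snd p) else 0)
      = (\<Sum>t\<leftarrow>V. if vs j = t then (if P t then G j t else 0) else 0)"
    by (simp add: sum_list_map_filter' comp_def if_distrib cong: if_cong) (rule arg_cong[where f=sum_list], auto)
  also have "\<dots> = (if P (vs j) then G j (vs j) else 0)"
    using sum_single[OF assms(1), of "vs j" "\<lambda>t. if P t then G j t else 0"] Cons.prems by simp
  finally show ?case using Cons by simp
qed simp

lemma cnt_map: "cnt x (map g L) = (\<Sum>p\<leftarrow>L. if ceval x (g p) then 1 else 0)"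
  by (induction L) auto

lemma wsum_map: "wsum x (map (\<lambda>p. (A p, C p)) L) = (\<Sum>p\<leftarrow>L. if ceval x (C p) then A p else 0)"
  by (induction L) (auto simp: wsum_def)

lemma sum_ind_card: "(\<Sum>j\<leftarrow>[0..<n]. if P j then 1 else (0::nat)) = card {j. j < n \<and> P j}"
proof -
  have "(\<Sum>j\<leftarrow>[0..<n]. if P j then 1 else (0::nat)) = length (filter P [0..<n])"
    by (induction n) auto
  also have "\<dots> = card {j. j < n \<and> P j}" unfolding length_filter_conv_card
    by (rule arg_cong[where f=card]) auto
  finally show ?thesis .
qed

context tf begin

definition Vset :: "nat \<Rightarrow> nat \<Rightarrow> fl list set" where
  "Vset l n = {run w l ! i | w i. length w = n \<and> i < n}"
definition Wset :: "nat \<Rightarrow> nat \<Rightarrow> fl list set" where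
  "Wset l n = {bsum w l h (run w l ! i) | w i h. length w = n \<and> i < n \<and> h < H}"

lemma words_finite: "finite {w :: 'a list. length w = n}"
  using finite_lists_length_eq[of "UNIV :: 'a set" n] by simp

lemma Vset_finite: "finite (Vset l n)"
proof (rule finite_subset)
  show "Vset l n \<subseteq> (\<lambda>(w,i). run w l ! i) ` ({w. length w = n} \<times> {..<n})"
    unfolding Vset_def by auto
qed (intro finite_imageI finite_cartesian_product words_finite finite_lessThan)

lemma Wset_finite: "finite (Wset l n)"
proof (rule finite_subset)
  show "Wset l n \<subseteq> (\<lambda>((w,i),h). bsum w l h (run w l ! i)) ` (({w. length w = n} \<times> {..<n}) \<times> {..<H})"
    unfolding Wset_def by force
qed (intro finite_imageI finite_cartesian_product words_finite finite_lessThan)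

definition Vlist :: "nat \<Rightarrow> nat \<Rightarrow> fl list list" where
  "Vlist l n = (SOME xs. set xs = Vset l n \<and> distinct xs)"
definition Wlist :: "nat \<Rightarrow> nat \<Rightarrow> fl list list" where
  "Wlist l n = (SOME xs. set xs = Wset l n \<and> distinct xs)"

lemma Vlist: "set (Vlist l n) = Vset l n \<and> distinct (Vlist l n)"
  unfolding Vlist_def by (rule someI_ex) (rule finite_distinct_list[OF Vset_finite])
lemma Wlist: "set (Wlist l n) = Wset l n \<and> distinct (Wlist l n)"
  unfolding Wlist_def by (rule someI_ex) (rule finite_distinct_list[OF Wset_finite])

lemma vs_in: "j < length w \<Longrightarrow> run w l ! j \<in> set (Vlist l (length w))"
  using Vlist by (auto simp: Vset_def)

definition Dl :: "nat \<Rightarrow> nat \<Rightarrow> nat" where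
  "Dl l n = mx (map (\<lambda>t. mx (map fl_exp t)) (Vlist l n))"

lemma Dl_ge: "t \<in> set (Vlist l n) \<Longrightarrow> c < length t \<Longrightarrow> fl_exp (t!c) \<le> Dl l n"
proof -
  assume a: "t \<in> set (Vlist l n)" "c < length t"
  have "fl_exp (t!c) \<le> mx (map fl_exp t)" by (rule mx_ge) (use a in auto)
  also have "\<dots> \<le> mx (map (\<lambda>t. mx (map fl_exp t)) (Vlist l n))" by (rule mx_ge) (use a in auto)
  finally show ?thesis by (simp add: Dl_def)
qed

definition acoef :: "nat \<Rightarrow> nat \<Rightarrow> fl list \<Rightarrow> nat \<Rightarrow> int" where
  "acoef l n t c = iv (t!c) * 2 ^ (Dl l n - fl_exp (t!c))"

lemma acoef_val: "t \<in> set (Vlist l n) \<Longrightarrow> c < length t \<Longrightarrow>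
   (of_int (acoef l n t c) :: rat) = fl_val (t!c) * 2 ^ Dl l n"
proof -
  assume a: "t \<in> set (Vlist l n)" "c < length t"
  have "(2::rat) ^ Dl l n = 2 ^ (Dl l n - fl_exp (t!c)) * 2 ^ fl_exp (t!c)"
    using Dl_ge[OF a] by (simp flip: power_add)
  thus ?thesis by (simp add: acoef_def fl_val_iv)
qed

definition PL :: "nat \<Rightarrow> nat \<Rightarrow> (nat \<times> fl list) list" where
  "PL l n = List.product [0..<n] (Vlist l n)"

definition selL :: "(nat \<Rightarrow> fl list \<Rightarrow> circ) \<Rightarrow> nat \<Rightarrow> nat \<Rightarrow> (fl list \<Rightarrow> bool) \<Rightarrow> circ list" where
  "selL CX l n P = map (\<lambda>p. CX (fst p) (snd p)) (filter (\<lambda>p. P (snd p)) (PL l n))"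

definition cMax :: "(nat \<Rightarrow> fl list \<Rightarrow> circ) \<Rightarrow> nat \<Rightarrow> nat \<Rightarrow> nat \<Rightarrow> fl list \<Rightarrow> rat \<Rightarrow> circ" where
  "cMax CX l n h x r = AndG [OrG (selL CX l n (\<lambda>t. gs l h x t = r)),
       AndG (map cNot (selL CX l n (\<lambda>t. r < gs l h x t)))]"

definition cCnt :: "(nat \<Rightarrow> fl list \<Rightarrow> circ) \<Rightarrow> nat \<Rightarrow> nat \<Rightarrow> nat \<Rightarrow> fl list \<Rightarrow> rat \<Rightarrow> nat \<Rightarrow> circ" where
  "cCnt CX l n h x r M = AndG [ThrGe M (selL CX l n (\<lambda>t. gs l h x t = r)),
       ThrLe M (selL CX l n (\<lambda>t. gs l h x t = r))]"

definition wps :: "(nat \<Rightarrow> fl list \<Rightarrow> circ) \<Rightarrow> nat \<Rightarrow> nat \<Rightarrow> nat \<Rightarrow> fl list \<Rightarrow> rat \<Rightarrow> nat \<Rightarrow> (int \<times> circ) list" where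
  "wps CX l n h x r c = map (\<lambda>p. (acoef l n (snd p) c, CX (fst p) (snd p))) (filter (\<lambda>p. gs l h x (snd p) = r) (PL l n))"

definition Tq :: "nat \<Rightarrow> nat \<Rightarrow> nat \<Rightarrow> nat \<Rightarrow> fl list \<Rightarrow> rat" where
  "Tq l n M c y = fl_val (y!c) * 2 ^ Dl l n / fl_val (fl_inv_nat M)"

definition cSum :: "(nat \<Rightarrow> fl list \<Rightarrow> circ) \<Rightarrow> nat \<Rightarrow> nat \<Rightarrow> nat \<Rightarrow> fl list \<Rightarrow> rat \<Rightarrow> nat \<Rightarrow> nat \<Rightarrow> fl list \<Rightarrow> circ" where
  "cSum CX l n h x r M c y = (if of_int \<lfloor>Tq l n M c y\<rfloor> = Tq l n M c y
      then cWeq (wps CX l n h x r c) \<lfloor>Tq l n M c y\<rfloor> else cF)"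

definition eT :: "nat \<Rightarrow> nat \<Rightarrow> fl list \<Rightarrow> rat \<Rightarrow> nat \<Rightarrow> nat \<Rightarrow> fl list \<Rightarrow> nat" where
  "eT l h x r M c t = (if gs l h x t = r then Defs.bitlen M else 0) + fl_exp (t!c)"

definition cExp :: "(nat \<Rightarrow> fl list \<Rightarrow> circ) \<Rightarrow> nat \<Rightarrow> nat \<Rightarrow> nat \<Rightarrow> fl list \<Rightarrow> rat \<Rightarrow> nat \<Rightarrow> nat \<Rightarrow> fl list \<Rightarrow> circ" where
  "cExp CX l n h x r M c y = AndG [AndG (map cNot (selL CX l n (\<lambda>t. fl_exp (y!c) < eT l h x r M c t))),
      OrG (cc (fl_exp (y!c) = 0) # selL CX l n (\<lambda>t. eT l h x r M c t = fl_exp (y!c)))]"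

definition cY :: "(nat \<Rightarrow> fl list \<Rightarrow> circ) \<Rightarrow> nat \<Rightarrow> nat \<Rightarrow> nat \<Rightarrow> fl list \<Rightarrow> fl list \<Rightarrow> circ" where
  "cY CX l n h x y = AndG [cc (length y = k), OrG (map (\<lambda>r. AndG [cMax CX l n h x r,
      OrG (map (\<lambda>M. AndG [cCnt CX l n h x r M, AndG (map (\<lambda>c. AndG [cc (isCanon (y!c)),
         cSum CX l n h x r M c y, cExp CX l n h x r M c y]) [0..<k])]) [1..<Suc n])])
      (map (gs l h x) (Vlist l n)))]"

definition K :: nat where "K = length (alph_list :: 'a list)"

primrec cX :: "nat \<Rightarrow> nat \<Rightarrow> nat \<Rightarrow> fl list \<Rightarrow> circ" where
  "cX 0 n i u = OrG (map (\<lambda>p. Inp (i * K + p) False) (filter (\<lambda>p. \<phi> (alph_list ! p) (Suc i) = u) [0..<K]))"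
| "cX (Suc l) n i u = OrG (map (\<lambda>xy. AndG (cX l n i (fst xy) # map (\<lambda>h. cY (cX l n) l n h (fst xy) (snd xy ! h)) [0..<H]))
      (filter (\<lambda>xy. f (Suc l) (fst xy # snd xy) = u) (List.product (Vlist l n) (List.n_lists H (Wlist l n)))))"

end

declare ceval.simps(2,3,4,5)[simp del]
declare ev_ThrGe[simp] ev_ThrLe[simp]

lemma of_int_sum_list': "(of_int (sum_list (map g xs)) :: rat) = sum_list (map (\<lambda>x. of_int (g x)) xs)"
  by (induction xs) auto

lemma ball_atLeast0[simp]: "(\<forall>h\<in>{0..<H}. P h) \<longleftrightarrow> (\<forall>h<(H::nat). P h)"
  by auto

lemma sum_list_cong': "(\<forall>p\<in>set L. g p = g' p) \<Longrightarrow> sum_list (map g L) = sum_list (map g' L)"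
  by (metis map_cong)

lemma inv_pos: "M \<ge> 1 \<Longrightarrow> fl_val (fl_inv_nat M) > 0"
proof -
  assume M: "M \<ge> 1"
  have "M < 2 ^ Defs.bitlen M" by (rule bl_less)
  hence "0 < 2 ^ Defs.bitlen M div M" using M div_greater_zero_iff[of "2 ^ Defs.bitlen M" M] by simp
  thus ?thesis by (simp add: fl_val_def fl_inv_nat_def)
qed

context tf begin

context
  fixes w :: "'a list" and l :: nat and CX :: "nat \<Rightarrow> fl list \<Rightarrow> circ"
  assumes lL: "l < nL" and wne: "w \<noteq> []"
    and HX: "\<And>j t. j < length w \<Longrightarrow> ceval (encode_word w) (CX j t) \<longleftrightarrow> run w l ! j = t"
begin

lemma run_ne: "run w l \<noteq> []"
  using wne run_len[of w l] by (metis length_0_conv)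

lemma ex_sel: "(\<exists>C\<in>set (selL CX l (length w) P). ceval (encode_word w) C) \<longleftrightarrow> (\<exists>j<length w. P (run w l ! j))"
proof
  assume "\<exists>C\<in>set (selL CX l (length w) P). ceval (encode_word w) C"
  thus "\<exists>j<length w. P (run w l ! j)" using HX by (auto simp: selL_def PL_def)
next
  assume "\<exists>j<length w. P (run w l ! j)"
  then obtain j where j: "j < length w" "P (run w l ! j)" by blast
  have "(j, run w l ! j) \<in> set (filter (\<lambda>p. P (snd p)) (PL l (length w)))"
    using j vs_in[OF j(1)] by (simp add: PL_def)
  moreover have "ceval (encode_word w) (CX j (run w l ! j))" using HX j by simp
  ultimately show "\<exists>C\<in>set (selL CX l (length w) P). ceval (encode_word w) C"
    unfolding selL_def by force
qed

lemma all_sel: "(\<forall>C\<in>set (selL CX l (length w) P). \<not> ceval (encode_word w) C) \<longleftrightarrow> (\<forall>j<length w. \<not> P (run w l ! j))"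
  using ex_sel[of P] by auto

lemma PL_ev: "\<forall>p\<in>set (filter Q (PL l (length w))). ceval (encode_word w) (CX (fst p) (snd p)) = (run w l ! fst p = snd p)"
  using HX by (auto simp: PL_def)

lemma vs_all: "\<forall>j\<in>set [0..<length w]. run w l ! j \<in> set (Vlist l (length w))"
  using vs_in by auto

lemma cnt_sel: "cnt (encode_word w) (selL CX l (length w) P) = card {j. j < length w \<and> P (run w l ! j)}"
proof -
  have "cnt (encode_word w) (selL CX l (length w) P) =
     (\<Sum>p\<leftarrow>filter (\<lambda>p. P (snd p)) (PL l (length w)). if run w l ! fst p = snd p then 1 else 0)"
    unfolding selL_def cnt_map by (rule sum_list_cong') (use PL_ev in auto)
  also have "\<dots> = (\<Sum>j\<leftarrow>[0..<length w]. if P (run w l ! j) then 1 else 0)"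
    unfolding PL_def using prod_sum[OF conjunct2[OF Vlist] vs_all, where P=P and G="\<lambda>_ _. 1::nat"] by simp
  also have "\<dots> = card {j. j < length w \<and> P (run w l ! j)}" by (rule sum_ind_card)
  finally show ?thesis .
qed

lemma wsum_sel: "wsum (encode_word w) (wps CX l (length w) h x r c) =
   (\<Sum>j\<leftarrow>[0..<length w]. if gs l h x (run w l ! j) = r then acoef l (length w) (run w l ! j) c else 0)"
proof -
  have "wsum (encode_word w) (wps CX l (length w) h x r c) =
     (\<Sum>p\<leftarrow>filter (\<lambda>p. gs l h x (snd p) = r) (PL l (length w)). if run w l ! fst p = snd p then acoef l (length w) (snd p) c else 0)"
    unfolding wps_def wsum_map by (rule sum_list_cong') (use PL_ev in auto)
  also have "\<dots> = (\<Sum>j\<leftarrow>[0..<length w]. if gs l h x (run w l ! j) = r then acoef l (length w) (run w l ! j) c else 0)"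
    unfolding PL_def using prod_sum[OF conjunct2[OF Vlist] vs_all, where P="\<lambda>t. gs l h x t = r" and G="\<lambda>_ t. acoef l (length w) t c"]
    by simp
  finally show ?thesis .
qed

lemma set_run: "set (run w l) = (\<lambda>j. run w l ! j) ` {..<length w}"
  by (auto simp: in_set_conv_nth image_def)

lemma evMax: "ceval (encode_word w) (cMax CX l (length w) h x r) \<longleftrightarrow> r = mval w l h x"
proof -
  have "ceval (encode_word w) (cMax CX l (length w) h x r) \<longleftrightarrow>
     (\<exists>j<length w. gs l h x (run w l ! j) = r) \<and> (\<forall>j<length w. \<not> r < gs l h x (run w l ! j))"
    unfolding cMax_def using ex_sel all_sel by simp
  also have "\<dots> \<longleftrightarrow> r = mval w l h x"
  proof -
    let ?S = "gs l h x ` set (run w l)"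
    have fin: "finite ?S" by simp
    have ne: "?S \<noteq> {}" using run_ne by simp
    have Sj: "?S = (\<lambda>j. gs l h x (run w l ! j)) ` {..<length w}" unfolding set_run by auto
    show ?thesis
    proof
      assume a: "(\<exists>j<length w. gs l h x (run w l ! j) = r) \<and> (\<forall>j<length w. \<not> r < gs l h x (run w l ! j))"
      have "Max ?S = r" by (rule Max_eqI[OF fin]) (use a Sj in auto)
      thus "r = mval w l h x" by (simp add: mval_def)
    next
      assume "r = mval w l h x"
      hence r: "r = Max ?S" by (simp add: mval_def)
      have "r \<in> ?S" using r Max_in[OF fin ne] by simp
      moreover have "\<forall>s\<in>?S. s \<le> r" using r Max_ge[OF fin] by simp
      ultimately have "r \<in> (\<lambda>j. gs l h x (run w l ! j)) ` {..<length w}"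
        "\<forall>j<length w. gs l h x (run w l ! j) \<le> r" unfolding Sj by auto
      thus "(\<exists>j<length w. gs l h x (run w l ! j) = r) \<and> (\<forall>j<length w. \<not> r < gs l h x (run w l ! j))"
        by (auto simp: not_less)
    qed
  qed
  finally show ?thesis .
qed

lemma evCnt: "ceval (encode_word w) (cCnt CX l (length w) h x r M) \<longleftrightarrow>
   M = card {j. j < length w \<and> gs l h x (run w l ! j) = r}"
  unfolding cCnt_def using cnt_sel by auto

lemma Mcnt_ge1: "Mcnt w l h x \<ge> 1"
proof -
  have "mval w l h x \<in> gs l h x ` set (run w l)" unfolding mval_def by (rule Max_in) (use run_ne in auto)
  then obtain j where j: "j < length w" "gs l h x (run w l ! j) = mval w l h x" by (auto simp: in_set_conv_nth)
  have "j \<in> {j. j < length w \<and> gs l h x (run w l ! j) = mval w l h x}" using j by simp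
  hence "0 < card {j. j < length w \<and> gs l h x (run w l ! j) = mval w l h x}" by (subst card_gt_0_iff) auto
  thus ?thesis by (simp add: Mcnt_def)
qed

lemma evSum:
  assumes c: "c < k"
  shows "ceval (encode_word w) (cSum CX l (length w) h x (mval w l h x) (Mcnt w l h x) c y) \<longleftrightarrow> fl_val (y!c) = Sb w l h x c"
proof -
  let ?r = "mval w l h x" and ?M = "Mcnt w l h x" and ?n = "length w"
  let ?q = "fl_val (fl_inv_nat ?M)"
  let ?D = "Dl l ?n"
  define Sv where "Sv = (\<Sum>j\<leftarrow>[0..<?n]. if gs l h x (run w l ! j) = ?r then fl_val (run w l ! j ! c) else 0)"
  have q: "?q > 0" using inv_pos[OF Mcnt_ge1] .
  have Sb: "Sb w l h x c = ?q * Sv" by (simp add: Sb_def Sv_def)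
  have ws: "of_int (wsum (encode_word w) (wps CX l ?n h x ?r c)) = (2::rat) ^ ?D * Sv"
  proof -
    have "of_int (wsum (encode_word w) (wps CX l ?n h x ?r c)) =
      (\<Sum>j\<leftarrow>[0..<?n]. of_int (if gs l h x (run w l ! j) = ?r then acoef l ?n (run w l ! j) c else 0) :: rat)"
      unfolding wsum_sel of_int_sum_list' by simp
    also have "\<dots> = (\<Sum>j\<leftarrow>[0..<?n]. 2 ^ ?D * (if gs l h x (run w l ! j) = ?r then fl_val (run w l ! j ! c) else 0))"
    proof (rule sum_list_cong', rule)
      fix j assume "j \<in> set [0..<?n]"
      hence j: "j < ?n" by simp
      have "c < length (run w l ! j)" using run_nth_len[of l j w] lL j c by simp
      thus "of_int (if gs l h x (run w l ! j) = ?r then acoef l ?n (run w l ! j) c else 0) =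
          (2::rat) ^ ?D * (if gs l h x (run w l ! j) = ?r then fl_val (run w l ! j ! c) else 0)"
        using acoef_val[OF vs_in[OF j]] by simp
    qed
    also have "\<dots> = 2 ^ ?D * Sv" unfolding Sv_def sum_list_const_mult ..
    finally show ?thesis .
  qed
  have Tq: "Tq l ?n ?M c y = fl_val (y!c) * 2 ^ ?D / ?q" by (simp add: Tq_def)
  show ?thesis
  proof (cases "of_int \<lfloor>Tq l ?n ?M c y\<rfloor> = Tq l ?n ?M c y")
    case True
    have "ceval (encode_word w) (cSum CX l ?n h x ?r ?M c y) \<longleftrightarrow>
        wsum (encode_word w) (wps CX l ?n h x ?r c) = \<lfloor>Tq l ?n ?M c y\<rfloor>"
      using True by (simp add: cSum_def ev_cWeq)
    also have "\<dots> \<longleftrightarrow> (of_int (wsum (encode_word w) (wps CX l ?n h x ?r c)) :: rat) = of_int \<lfloor>Tq l ?n ?M c y\<rfloor>"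
      by linarith
    also have "\<dots> \<longleftrightarrow> 2 ^ ?D * Sv = Tq l ?n ?M c y" by (simp only: ws True)
    also have "\<dots> \<longleftrightarrow> 2 ^ ?D * Sv = fl_val (y!c) * 2 ^ ?D / ?q" using Tq by simp
    also have "\<dots> \<longleftrightarrow> fl_val (y!c) = Sb w l h x c" using q unfolding Sb by (auto simp: field_simps)
    finally show ?thesis .
  next
    case False
    have "fl_val (y!c) \<noteq> Sb w l h x c"
    proof
      assume a: "fl_val (y!c) = Sb w l h x c"
      hence "Tq l ?n ?M c y = 2 ^ ?D * Sv" using q unfolding Tq Sb by (simp add: field_simps)
      hence "Tq l ?n ?M c y = of_int (wsum (encode_word w) (wps CX l ?n h x ?r c))" using ws by simp
      thus False using False by simp
    qed
    thus ?thesis using False by (simp add: cSum_def cF_def)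
  qed
qed

lemma evExp:
  "ceval (encode_word w) (cExp CX l (length w) h x (mval w l h x) (Mcnt w l h x) c y) \<longleftrightarrow> fl_exp (y!c) = Eb w l h x c"
proof -
  let ?e = "\<lambda>j. eT l h x (mval w l h x) (Mcnt w l h x) c (run w l ! j)"
  have "ceval (encode_word w) (cExp CX l (length w) h x (mval w l h x) (Mcnt w l h x) c y) \<longleftrightarrow>
     (\<forall>j<length w. \<not> fl_exp (y!c) < ?e j) \<and> (fl_exp (y!c) = 0 \<or> (\<exists>j<length w. ?e j = fl_exp (y!c)))"
    unfolding cExp_def using ex_sel all_sel by simp
  also have "\<dots> \<longleftrightarrow> mx (map ?e [0..<length w]) = fl_exp (y!c)"
    unfolding mx_eq_iff set_map set_upt by (auto simp: not_less image_iff Ball_def Bex_def atLeastLessThan_iff)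
  also have "mx (map ?e [0..<length w]) = Eb w l h x c" by (simp add: Eb_def eT_def)
  finally show ?thesis by auto
qed

lemma cY_correct: "ceval (encode_word w) (cY CX l (length w) h x y) \<longleftrightarrow> bsum w l h x = y"
proof -
  let ?r = "mval w l h x" and ?M = "Mcnt w l h x" and ?n = "length w" and ?e = "encode_word w"
  let ?P = "\<lambda>r M c. isCanon (y!c) \<and> ceval ?e (cSum CX l ?n h x r M c y) \<and> ceval ?e (cExp CX l ?n h x r M c y)"
  have "ceval ?e (cY CX l ?n h x y) \<longleftrightarrow> length y = k \<and>
     (\<exists>r\<in>set (map (gs l h x) (Vlist l ?n)). ceval ?e (cMax CX l ?n h x r) \<and> (\<exists>M\<in>set [1..<Suc ?n].
        ceval ?e (cCnt CX l ?n h x r M) \<and> (\<forall>c\<in>set [0..<k]. ?P r M c)))"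
    unfolding cY_def by simp
  also have "\<dots> \<longleftrightarrow> length y = k \<and> (\<forall>c<k. ?P ?r ?M c)"
  proof -
    have r: "?r \<in> set (map (gs l h x) (Vlist l ?n))"
    proof -
      have "?r \<in> gs l h x ` set (run w l)" unfolding mval_def by (rule Max_in) (use run_ne in auto)
      moreover have "set (run w l) \<subseteq> set (Vlist l ?n)" using vs_in by (auto simp: in_set_conv_nth)
      ultimately show ?thesis by auto
    qed
    have M: "?M \<in> set [1..<Suc ?n]" using Mcnt_ge1[of h x] Mcnt_le[of w l h x] by auto
    have "(\<exists>r\<in>set (map (gs l h x) (Vlist l ?n)). ceval ?e (cMax CX l ?n h x r) \<and> (\<exists>M\<in>set [1..<Suc ?n].
        ceval ?e (cCnt CX l ?n h x r M) \<and> (\<forall>c\<in>set [0..<k]. ?P r M c))) \<longleftrightarrow> (\<forall>c<k. ?P ?r ?M c)"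
    proof
      assume "\<exists>r\<in>set (map (gs l h x) (Vlist l ?n)). ceval ?e (cMax CX l ?n h x r) \<and> (\<exists>M\<in>set [1..<Suc ?n].
        ceval ?e (cCnt CX l ?n h x r M) \<and> (\<forall>c\<in>set [0..<k]. ?P r M c))"
      then obtain r M where a: "ceval ?e (cMax CX l ?n h x r)" "ceval ?e (cCnt CX l ?n h x r M)"
        "\<forall>c\<in>set [0..<k]. ?P r M c" by blast
      have r: "r = ?r" using a(1) evMax by blast
      have "M = ?M" using a(2) evCnt unfolding r Mcnt_def by blast
      thus "\<forall>c<k. ?P ?r ?M c" using a(3) r by simp
    next
      assume "\<forall>c<k. ?P ?r ?M c"
      moreover have "ceval ?e (cMax CX l ?n h x ?r)" using evMax by blast
      moreover have "ceval ?e (cCnt CX l ?n h x ?r ?M)" using evCnt unfolding Mcnt_def by blast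
      ultimately show "\<exists>r\<in>set (map (gs l h x) (Vlist l ?n)). ceval ?e (cMax CX l ?n h x r) \<and> (\<exists>M\<in>set [1..<Suc ?n].
        ceval ?e (cCnt CX l ?n h x r M) \<and> (\<forall>c\<in>set [0..<k]. ?P r M c))"
        using r M by (intro bexI[OF _ r] conjI bexI[OF _ M]) auto
    qed
    thus ?thesis by blast
  qed
  also have "\<dots> \<longleftrightarrow> length y = k \<and> (\<forall>c<k. isCanon (y!c) \<and> fl_exp (y!c) = Eb w l h x c \<and> fl_val (y!c) = Sb w l h x c)"
  proof -
    have "\<forall>c<k. ?P ?r ?M c \<longleftrightarrow> (isCanon (y!c) \<and> fl_exp (y!c) = Eb w l h x c \<and> fl_val (y!c) = Sb w l h x c)"
      using evSum evExp by blast
    thus ?thesis by blast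
  qed
  also have "\<dots> \<longleftrightarrow> bsum w l h x = y" using bsum_eq_iff[of l w h x y] lL by simp
  finally show ?thesis .
qed

end

lemma cX_correct: "l \<le> nL \<Longrightarrow> w \<noteq> [] \<Longrightarrow> j < length w \<Longrightarrow>
   ceval (encode_word w) (cX l (length w) j t) \<longleftrightarrow> run w l ! j = t"
proof (induction l arbitrary: j t)
  case 0
  have ap: "distinct (alph_list :: 'a list)" "set (alph_list :: 'a list) = UNIV" using alph_prop by auto
  have el: "length (encode_word w) = length w * K" by (simp add: encode_len K_def)
  have "ceval (encode_word w) (cX 0 (length w) j t) \<longleftrightarrow>
     (\<exists>p<K. \<phi> (alph_list ! p) (Suc j) = t \<and> alph_list ! p = w ! j)"
  proof -
    have idx: "p < K \<Longrightarrow> j * K + p < length (encode_word w)" for p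
      using 0 el by (metis add_less_cancel_left less_imp_le_nat mult.commute mult_Suc_right nat_mult_le_cancel_disj
        Suc_leI order_less_le_trans add.commute)
    show ?thesis using encode_nth[of j w] 0 idx by (auto simp: K_def)
  qed
  also have "\<dots> \<longleftrightarrow> \<phi> (w ! j) (Suc j) = t"
  proof
    assume "\<phi> (w ! j) (Suc j) = t"
    moreover obtain p where "p < K" "alph_list ! p = w ! j"
      using ap(2) by (metis K_def UNIV_I in_set_conv_nth)
    ultimately show "\<exists>p<K. \<phi> (alph_list ! p) (Suc j) = t \<and> alph_list ! p = w ! j" by auto
  qed auto
  finally show ?case using 0 by (simp add: run0_nth)
next
  case (Suc l)
  let ?n = "length w"
  have lL: "l < nL" using Suc by simp
  have HX: "\<And>j t. j < length w \<Longrightarrow> ceval (encode_word w) (cX l ?n j t) \<longleftrightarrow> run w l ! j = t"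
    using Suc by simp
  note cy = cY_correct[OF lL Suc.prems(2) HX]
  let ?x = "run w l ! j"
  let ?ys = "map (\<lambda>h. bsum w l h ?x) [0..<H]"
  have "ceval (encode_word w) (cX (Suc l) ?n j t) \<longleftrightarrow>
     (\<exists>xy\<in>set (List.product (Vlist l ?n) (List.n_lists H (Wlist l ?n))). f (Suc l) (fst xy # snd xy) = t \<and>
        run w l ! j = fst xy \<and> (\<forall>h<H. bsum w l h (fst xy) = snd xy ! h))"
  proof -
    have "ceval (encode_word w) (cX (Suc l) ?n j t) \<longleftrightarrow>
     (\<exists>xy\<in>set (List.product (Vlist l ?n) (List.n_lists H (Wlist l ?n))). f (Suc l) (fst xy # snd xy) = t \<and>
        ceval (encode_word w) (cX l ?n j (fst xy)) \<and> (\<forall>h<H. ceval (encode_word w) (cY (cX l ?n) l ?n h (fst xy) (snd xy ! h))))"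
      by auto
    thus ?thesis using HX[OF Suc.prems(3)] cy by simp
  qed
  also have "\<dots> \<longleftrightarrow> f (Suc l) (?x # ?ys) = t"
  proof
    assume "\<exists>xy\<in>set (List.product (Vlist l ?n) (List.n_lists H (Wlist l ?n))). f (Suc l) (fst xy # snd xy) = t \<and>
        run w l ! j = fst xy \<and> (\<forall>h<H. bsum w l h (fst xy) = snd xy ! h)"
    then obtain x ys where a: "ys \<in> set (List.n_lists H (Wlist l ?n))" "f (Suc l) (x # ys) = t" "run w l ! j = x"
      "\<forall>h<H. bsum w l h x = ys ! h" by auto
    have "length ys = H" using a(1) by (simp add: set_n_lists)
    hence "ys = ?ys" using a(3,4) by (intro nth_equalityI) auto
    thus "f (Suc l) (?x # ?ys) = t" using a by simp
  next
    assume a: "f (Suc l) (?x # ?ys) = t"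
    have "?x \<in> set (Vlist l ?n)" by (rule vs_in[OF Suc.prems(3)])
    moreover have "?ys \<in> set (List.n_lists H (Wlist l ?n))"
      using Wlist Suc.prems(3) by (auto simp: set_n_lists Wset_def) blast
    ultimately show "\<exists>xy\<in>set (List.product (Vlist l ?n) (List.n_lists H (Wlist l ?n))). f (Suc l) (fst xy # snd xy) = t \<and>
        run w l ! j = fst xy \<and> (\<forall>h<H. bsum w l h (fst xy) = snd xy ! h)"
      using a by (intro bexI[of _ "(?x, ?ys)"]) auto
  qed
  finally show ?case using Suc.prems(3) by (simp add: runS_nth)
qed

end

lemma dg:
  assumes "\<forall>c\<in>set cs. cdepth c \<le> D" "Suc D \<le> D'"
  shows "cdepth (AndG cs) \<le> D'" "cdepth (OrG cs) \<le> D'" "cdepth (ThrGe t cs) \<le> D'" "cdepth (ThrLe t cs) \<le> D'"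
  using dep_gate[OF assms(1)] assms(2) by (auto intro: order_trans)

lemma dep_cc1: "1 \<le> D \<Longrightarrow> cdepth (cc b) \<le> D"
  using dep_cc[of b 0] by simp

declare cdepth.simps(2,3,4,5)[simp del]

context tf begin

lemma selL_dep: "\<forall>j t. cdepth (CX j t) \<le> D \<Longrightarrow> \<forall>c\<in>set (selL CX l n P). cdepth c \<le> D"
  by (auto simp: selL_def)

lemma cY_depth:
  assumes CX: "\<forall>j t. cdepth (CX j t) \<le> D" and D1: "1 \<le> D"
  shows "cdepth (cY CX l n h x y) \<le> D + 10"
proof -
  note s = selL_dep[OF CX]
  have ns: "\<forall>c\<in>set (map cNot (selL CX l n P)). cdepth c \<le> Suc D" for P
    using s by (auto intro: dep_cNot)
  have mx: "cdepth (cMax CX l n h x r) \<le> D + 3" for r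
  proof -
    have a1: "cdepth (OrG (selL CX l n (\<lambda>t. gs l h x t = r))) \<le> D + 2" by (rule dg(2)[OF s]) simp
    have a2: "cdepth (AndG (map cNot (selL CX l n (\<lambda>t. r < gs l h x t)))) \<le> D + 2" by (rule dg(1)[OF ns]) simp
    show ?thesis unfolding cMax_def by (rule dg(1)[where D="D+2"]) (use a1 a2 in auto)
  qed
  have cn: "cdepth (cCnt CX l n h x r M) \<le> D + 3" for r M
  proof -
    have a1: "cdepth (ThrGe M (selL CX l n (\<lambda>t. gs l h x t = r))) \<le> D + 2" by (rule dg(3)[OF s]) simp
    have a2: "cdepth (ThrLe M (selL CX l n (\<lambda>t. gs l h x t = r))) \<le> D + 2" by (rule dg(4)[OF s]) simp
    show ?thesis unfolding cCnt_def by (rule dg(1)[where D="D+2"]) (use a1 a2 in auto)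
  qed
  have sm: "cdepth (cSum CX l n h x r M c y) \<le> D + 3" for r M c
  proof -
    have "\<forall>(a,C)\<in>set (wps CX l n h x r c). cdepth C \<le> D" using CX by (auto simp: wps_def)
    hence "cdepth (cWeq (wps CX l n h x r c) z) \<le> D + 3" for z using dep_cWeq[of "wps CX l n h x r c" D z] by simp
    moreover have "cdepth cF \<le> D + 3" unfolding cF_def by (rule dg(2)[where D=0]) auto
    ultimately show ?thesis by (simp add: cSum_def)
  qed
  have ex: "cdepth (cExp CX l n h x r M c y) \<le> D + 3" for r M c
  proof -
    have "\<forall>c\<in>set (cc (fl_exp (y!c) = 0) # selL CX l n (\<lambda>t. eT l h x r M c t = fl_exp (y!c))). cdepth c \<le> D"
      using s D1 by (auto intro: dep_cc1)
    hence a1: "cdepth (OrG (cc (fl_exp (y!c) = 0) # selL CX l n (\<lambda>t. eT l h x r M c t = fl_exp (y!c)))) \<le> D + 2"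
      by (rule dg(2)[where D=D]) auto
    have a2: "cdepth (AndG (map cNot (selL CX l n (\<lambda>t. fl_exp (y!c) < eT l h x r M c t)))) \<le> D + 2" by (rule dg(1)[OF ns]) simp
    show ?thesis unfolding cExp_def by (rule dg(1)[where D="D+2"]) (use a1 a2 in auto)
  qed
  have pc: "cdepth (AndG [cc (isCanon (y!c)), cSum CX l n h x r M c y, cExp CX l n h x r M c y]) \<le> D + 4" for r M c
    using sm[of r M c] ex[of r M c] D1 by (intro dg(1)[where D="D+3"]) (auto intro: dep_cc1)
  have inner: "cdepth (AndG [cCnt CX l n h x r M, AndG (map (\<lambda>c. AndG [cc (isCanon (y!c)),
         cSum CX l n h x r M c y, cExp CX l n h x r M c y]) [0..<k])]) \<le> D + 6" for r M
  proof -
    have "cdepth (AndG (map (\<lambda>c. AndG [cc (isCanon (y!c)),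
         cSum CX l n h x r M c y, cExp CX l n h x r M c y]) [0..<k])) \<le> D + 5"
      by (rule dg(1)[where D="D+4"]) (use pc in auto)
    thus ?thesis using cn[of r M] by (intro dg(1)[where D="D+5"]) auto
  qed
  have rr: "cdepth (AndG [cMax CX l n h x r, OrG (map (\<lambda>M. AndG [cCnt CX l n h x r M, AndG (map (\<lambda>c. AndG [cc (isCanon (y!c)),
         cSum CX l n h x r M c y, cExp CX l n h x r M c y]) [0..<k])]) [1..<Suc n])]) \<le> D + 8" for r
  proof -
    have "cdepth (OrG (map (\<lambda>M. AndG [cCnt CX l n h x r M, AndG (map (\<lambda>c. AndG [cc (isCanon (y!c)),
         cSum CX l n h x r M c y, cExp CX l n h x r M c y]) [0..<k])]) [1..<Suc n])) \<le> D + 7"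
      by (rule dg(2)[where D="D+6"]) (use inner in auto)
    thus ?thesis using mx[of r] by (intro dg(1)[where D="D+7"]) auto
  qed
  have "cdepth (OrG (map (\<lambda>r. AndG [cMax CX l n h x r, OrG (map (\<lambda>M. AndG [cCnt CX l n h x r M, AndG (map (\<lambda>c. AndG [cc (isCanon (y!c)),
         cSum CX l n h x r M c y, cExp CX l n h x r M c y]) [0..<k])]) [1..<Suc n])]) (map (gs l h x) (Vlist l n)))) \<le> D + 9"
    by (rule dg(2)[where D="D+8"]) (use rr in auto)
  thus ?thesis unfolding cY_def using D1 by (intro dg(1)[where D="D+9"]) (auto intro: dep_cc1)
qed

lemma cX_depth: "cdepth (cX l n i u) \<le> 12 * l + 1"
proof (induction l arbitrary: i u)
  case 0 show ?case unfolding cX.simps by (rule dg(2)[where D=0]) auto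
next
  case (Suc l)
  have a: "\<forall>j t. cdepth (cX l n j t) \<le> 12 * l + 1" using Suc by blast
  have cy: "cdepth (cY (cX l n) l n h x y) \<le> 12 * l + 11" for h x y
    using cY_depth[OF a, of l n h x y] by simp
  have "\<forall>c\<in>set (cX l n i x # map (\<lambda>h. cY (cX l n) l n h x (ys ! h)) [0..<H]). cdepth c \<le> 12 * l + 11" for x ys
    using Suc.IH[of i x] by (auto intro: cy)
  hence "cdepth (AndG (cX l n i x # map (\<lambda>h. cY (cX l n) l n h x (ys ! h)) [0..<H])) \<le> 12 * l + 12" for x ys
    by (intro dg(1)[where D="12 * l + 11"]) auto
  thus ?case unfolding cX.simps by (intro dg(2)[where D="12 * l + 12"]) auto
qed

lemma selL_fb: "\<forall>j t. fb F (CX j t) \<Longrightarrow> \<forall>c\<in>set (selL CX l n P). fb F c"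
  by (auto simp: selL_def)

lemma len_selL: "length (selL CX l n P) \<le> length (PL l n)"
  by (simp add: selL_def)

lemma cY_fb:
  assumes CX: "\<forall>j t. fb F (CX j t)"
    and F1: "k + 3 \<le> F" "n \<le> F" "length (Vlist l n) \<le> F" "1 + length (PL l n) \<le> F"
    and F2: "length (PL l n) * AB \<le> F"
    and AB: "\<forall>t\<in>set (Vlist l n). \<forall>c<k. nat \<bar>acoef l n t c\<bar> \<le> AB"
  shows "fb F (cY CX l n h x y)"
proof -
  note s = selL_fb[OF CX]
  have lp: "length (selL CX l n P) \<le> F" for P using len_selL[of CX l n P] F1 by simp
  have F3: "3 \<le> F" "1 \<le> F" "2 \<le> F" using F1 by auto
  have ns: "\<forall>c\<in>set (map cNot (selL CX l n P)). fb F c" for P using s F3 by (auto intro: fb_cNot)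
  have mx: "fb F (cMax CX l n h x r)" for r unfolding cMax_def using s ns lp F3 by simp
  have cn: "fb F (cCnt CX l n h x r M)" for r M unfolding cCnt_def using s lp F3 by simp
  have sm: "fb F (cSum CX l n h x r M c y)" if ck: "c < k" for r M c
  proof -
    have "(\<Sum>(a,C)\<leftarrow>wps CX l n h x r c. nat \<bar>a\<bar>) \<le> length (wps CX l n h x r c) * AB"
      by (rule sum_list_le_len2[of _ "\<lambda>(a,C). nat \<bar>a\<bar>" AB, simplified]) (use AB ck in \<open>auto simp: wps_def PL_def\<close>)
    also have "\<dots> \<le> length (PL l n) * AB" by (simp add: wps_def)
    finally have "(\<Sum>(a,C)\<leftarrow>wps CX l n h x r c. nat \<bar>a\<bar>) \<le> F" using F2 by simp
    moreover have "\<forall>(a,C)\<in>set (wps CX l n h x r c). fb F C" using CX by (auto simp: wps_def)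
    ultimately show ?thesis using F3 by (auto simp: cSum_def cF_def intro!: fb_cWeq)
  qed
  have ex: "fb F (cExp CX l n h x r M c y)" for r M c
    unfolding cExp_def using s ns lp F3 F1(4) len_selL[of CX l n "\<lambda>t. eT l h x r M c t = fl_exp (y!c)"] by (auto simp: fb_cc)
  have pc: "fb F (AndG [cc (isCanon (y!c)), cSum CX l n h x r M c y, cExp CX l n h x r M c y])" if "c < k" for r M c
    using sm[OF that] ex F3 by (simp add: fb_cc)
  show ?thesis unfolding cY_def using mx cn pc F1 F3 by (simp add: fb_cc)
qed

end

context tf begin

lemma cX_fb:
  assumes F: "K \<le> F" "H + 1 \<le> F"
    and L: "\<And>l'. l' < l \<Longrightarrow> length (Vlist l' n) * length (Wlist l' n) ^ H \<le> F \<and> k + 3 \<le> F \<and> n \<le> F \<and>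
       length (Vlist l' n) \<le> F \<and> 1 + length (PL l' n) \<le> F \<and> length (PL l' n) * AB \<le> F \<and>
       (\<forall>t\<in>set (Vlist l' n). \<forall>c<k. nat \<bar>acoef l' n t c\<bar> \<le> AB)"
  shows "fb F (cX l n i u)"
  using L
proof (induction l arbitrary: i u)
  case 0
  have "length (filter (\<lambda>p. \<phi> (alph_list ! p) (Suc i) = u) [0..<K]) \<le> K" by (metis length_filter_le length_upt minus_nat.diff_0)
  thus ?case using F by simp
next
  case (Suc l)
  have Ll: "length (Vlist l n) * length (Wlist l n) ^ H \<le> F \<and> k + 3 \<le> F \<and> n \<le> F \<and>
       length (Vlist l n) \<le> F \<and> 1 + length (PL l n) \<le> F \<and> length (PL l n) * AB \<le> F \<and>
       (\<forall>t\<in>set (Vlist l n). \<forall>c<k. nat \<bar>acoef l n t c\<bar> \<le> AB)" using Suc.prems[of l] by simp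
  have IH: "\<forall>j t. fb F (cX l n j t)"
  proof (intro allI)
    fix j t show "fb F (cX l n j t)" by (rule Suc.IH) (use Suc.prems in auto)
  qed
  have cy: "fb F (cY (cX l n) l n h x y)" for h x y
    using Ll by (intro cY_fb[OF IH]) auto
  have len: "length (filter (\<lambda>xy. f (Suc l) (fst xy # snd xy) = u) (List.product (Vlist l n) (List.n_lists H (Wlist l n)))) \<le> F"
  proof -
    have "length (filter (\<lambda>xy. f (Suc l) (fst xy # snd xy) = u) (List.product (Vlist l n) (List.n_lists H (Wlist l n))))
       \<le> length (List.product (Vlist l n) (List.n_lists H (Wlist l n)))" by (rule length_filter_le)
    also have "\<dots> = length (Vlist l n) * length (Wlist l n) ^ H" by (simp add: length_n_lists)
    finally show ?thesis using Ll by linarith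
  qed
  show ?case using len IH cy F by auto
qed

lemma bound_facts:
  assumes Abd: "\<forall>l\<le>nL. \<forall>w::'a list. \<forall>i<length w. vec_size (run w l ! i) \<le> A * Defs.bitlen (length w)
   \<and> (\<forall>h x. vec_size (bsum w l h x) \<le> A * Defs.bitlen (length w))"
    and n1: "n \<ge> 1" and l: "l \<le> nL"
  shows "Vset l n \<subseteq> VS k (A * Defs.bitlen n)"
    and "l < nL \<Longrightarrow> Wset l n \<subseteq> VS k (A * Defs.bitlen n)"
    and "length (Vlist l n) \<le> 8 ^ (A * Defs.bitlen n * k)"
    and "l < nL \<Longrightarrow> length (Wlist l n) \<le> 8 ^ (A * Defs.bitlen n * k)"
    and "\<forall>t\<in>set (Vlist l n). \<forall>c<k. nat \<bar>acoef l n t c\<bar> \<le> 4 ^ (A * Defs.bitlen n)"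
proof -
  let ?B = "A * Defs.bitlen n"
  show V: "Vset l n \<subseteq> VS k ?B"
  proof
    fix v assume "v \<in> Vset l n"
    then obtain w i where wi: "v = run w l ! i" "length w = n" "i < n" by (auto simp: Vset_def)
    show "v \<in> VS k ?B" using wi Abd l run_nth_len[OF l, of i w] by (intro in_VS) auto
  qed
  show W: "Wset l n \<subseteq> VS k ?B" if "l < nL"
  proof
    fix v assume "v \<in> Wset l n"
    then obtain w i h where wi: "v = bsum w l h (run w l ! i)" "length w = n" "i < n" by (auto simp: Wset_def)
    show "v \<in> VS k ?B" using wi Abd l bsum_char[OF l, of w h "run w l ! i"] by (intro in_VS) auto
  qed
  show "length (Vlist l n) \<le> 8 ^ (?B * k)"
  proof -
    have "length (Vlist l n) = card (Vset l n)" using Vlist distinct_card by metis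
    also have "\<dots> \<le> card (VS k ?B)" by (rule card_mono[OF VS_finite V])
    also have "\<dots> \<le> 8 ^ (?B * k)" by (rule VS_card)
    finally show ?thesis .
  qed
  show "length (Wlist l n) \<le> 8 ^ (?B * k)" if "l < nL"
  proof -
    have "length (Wlist l n) = card (Wset l n)" using Wlist distinct_card by metis
    also have "\<dots> \<le> card (VS k ?B)" by (rule card_mono[OF VS_finite W[OF that]])
    also have "\<dots> \<le> 8 ^ (?B * k)" by (rule VS_card)
    finally show ?thesis .
  qed
  have fsz: "fl_size x \<le> ?B" if "t \<in> set (Vlist l n)" "x \<in> set t" for t x
  proof -
    have "t \<in> VS k ?B" using V Vlist that(1) by auto
    thus ?thesis using that(2) by (auto simp: VS_def FLe_def)
  qed
  have Dl: "Dl l n \<le> ?B" unfolding Dl_def mx_le_iff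
  proof
    fix d assume "d \<in> set (map (\<lambda>t. mx (map fl_exp t)) (Vlist l n))"
    then obtain t where t: "t \<in> set (Vlist l n)" "d = mx (map fl_exp t)" by auto
    have "\<forall>x\<in>set t. fl_exp x \<le> ?B" using fsz[OF t(1)] exp_lt by (meson less_imp_le order_trans)
    thus "d \<le> ?B" unfolding t(2) mx_le_iff by simp
  qed
  show "\<forall>t\<in>set (Vlist l n). \<forall>c<k. nat \<bar>acoef l n t c\<bar> \<le> 4 ^ ?B"
  proof (intro ballI allI impI)
    fix t c assume t: "t \<in> set (Vlist l n)" and c: "c < k"
    have lt: "length t = k" using V Vlist t by (auto simp: VS_def)
    have "fl_size (t!c) \<le> ?B" using fsz[OF t] c lt by simp
    hence num: "fl_num (t!c) \<le> 2 ^ ?B" using num_lt[of "t!c"] power_increasing[of "fl_size (t!c)" ?B "2::nat"]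
      by linarith
    have "nat \<bar>acoef l n t c\<bar> = fl_num (t!c) * 2 ^ (Dl l n - fl_exp (t!c))"
      by (simp add: acoef_def iv_def sgn_int_def abs_mult nat_mult_distrib nat_power_eq)
    also have "\<dots> \<le> 2 ^ ?B * 2 ^ ?B"
      using num Dl by (intro mult_mono power_increasing) auto
    also have "\<dots> = 4 ^ ?B" by (simp flip: power_mult_distrib)
    finally show "nat \<bar>acoef l n t c\<bar> \<le> 4 ^ ?B" .
  qed
qed

end

lemma pow8: "(8::nat) ^ (A * b * k) = (2 ^ b) ^ (3 * A * k)"
proof -
  have "(8::nat) ^ (A * b * k) = (2 ^ 3) ^ (A * b * k)" by simp
  also have "\<dots> = 2 ^ (3 * (A * b * k))" by (simp only: power_mult)
  also have "\<dots> = 2 ^ (b * (3 * A * k))" by (simp add: mult_ac)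
  also have "\<dots> = (2 ^ b) ^ (3 * A * k)" by (simp only: power_mult)
  finally show ?thesis .
qed

lemma pow4: "(4::nat) ^ (A * b) = (2 ^ b) ^ (2 * A)"
proof -
  have "(4::nat) ^ (A * b) = (2 ^ 2) ^ (A * b)" by simp
  also have "\<dots> = 2 ^ (2 * (A * b))" by (simp only: power_mult)
  also have "\<dots> = 2 ^ (b * (2 * A))" by (simp add: mult_ac)
  also have "\<dots> = (2 ^ b) ^ (2 * A)" by (simp only: power_mult)
  finally show ?thesis .
qed

lemma card_alph: "length (alph_list :: 'a::finite list) = card (UNIV :: 'a set)"
  using alph_prop[where 'a='a] distinct_card by metis

context tf begin

lemma main_TC0:
  fixes acc :: "fl list \<Rightarrow> bool" and Lang :: "'a list set"
  assumes rec: "\<forall>w. w \<noteq> [] \<longrightarrow> (acc (hd (tf_run k H \<phi> s f w nL)) \<longleftrightarrow> w \<in> Lang)"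
  shows "Lang \<in> TC0"
proof -
  obtain A where Abd: "\<forall>l\<le>nL. \<forall>w::'a list. \<forall>i<length w. vec_size (run w l ! i) \<le> A * Defs.bitlen (length w)
   \<and> (\<forall>h x. vec_size (bsum w l h x) \<le> A * Defs.bitlen (length w))" using all_bound by blast
  define CK where "CK = K + H + k + 4"
  define Z where "Z = 1 + 3 * A * k * (H + 1) + 2 * A"
  define Fn where "Fn n = CK * (2 ^ Defs.bitlen n) ^ Z" for n :: nat
  define C where "C m = (if m div K = 0 then cc ([] \<in> Lang)
      else OrG (map (\<lambda>u. cX nL (m div K) 0 u) (filter acc (Vlist nL (m div K)))))" for m
  define d where "d = 12 * nL + 2"
  define c where "c = (2 * CK * 2 ^ Z) ^ d + Z * d + 1"
  have K1: "K \<ge> 1" unfolding K_def card_alph by (simp add: Suc_le_eq finite_UNIV_card_ge_0)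
  have Kc: "K = card (UNIV :: 'a set)" unfolding K_def card_alph ..
  have Z1: "Z \<ge> 1" by (simp add: Z_def)
  have fbn: "fb (Fn n) (cX nL n 0 u)" if n1: "n \<ge> 1" for n u
  proof -
    define G where "G = (2::nat) ^ Defs.bitlen n"
    have G1: "G \<ge> 1" by (simp add: G_def)
    have nG: "n \<le> G" using bl_less[of n] by (simp add: G_def)
    have pw: "a \<le> b \<Longrightarrow> G ^ a \<le> G ^ b" for a b using G1 by (intro power_increasing)
    have GZ: "G ^ Z \<ge> 1" using G1 by simp
    have Fn: "Fn n = CK * G ^ Z" by (simp add: Fn_def G_def)
    have cG: "x \<le> CK \<Longrightarrow> x \<le> Fn n" for x using GZ Fn
      by (metis le_trans mult.right_neutral mult_le_mono2)
    have gG: "x \<le> G ^ Z \<Longrightarrow> x \<le> Fn n" for x unfolding Fn CK_def by (rule order_trans[OF _ mult_le_mono1[of 1]]) auto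
    note bf = bound_facts[OF Abd n1]
    have V: "length (Vlist l n) \<le> G ^ (3 * A * k)" if "l \<le> nL" for l
      using bf(3)[OF that] unfolding pow8 G_def .
    have W: "length (Wlist l n) \<le> G ^ (3 * A * k)" if "l < nL" for l
      using bf(4)[of l] that unfolding pow8 G_def by simp
    have AB: "\<forall>t\<in>set (Vlist l n). \<forall>c<k. nat \<bar>acoef l n t c\<bar> \<le> G ^ (2 * A)" if "l \<le> nL" for l
      using bf(5)[OF that] unfolding pow4 G_def .
    show ?thesis
    proof (rule cX_fb[where AB = "G ^ (2 * A)"])
      show "K \<le> Fn n" "H + 1 \<le> Fn n" by (auto intro!: cG simp: CK_def)
      fix l' assume l': "l' < nL"
      have PL: "length (PL l' n) \<le> G ^ (1 + 3 * A * k)"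
      proof -
        have "length (PL l' n) = n * length (Vlist l' n)" by (simp add: PL_def)
        also have "\<dots> \<le> G * G ^ (3 * A * k)" using V[of l'] l' nG by (intro mult_le_mono) auto
        finally show ?thesis by simp
      qed
      have "length (Vlist l' n) * length (Wlist l' n) ^ H \<le> G ^ (3 * A * k) * (G ^ (3 * A * k)) ^ H"
        using V[of l'] W[OF l'] l' by (intro mult_le_mono power_mono) auto
      also have "\<dots> = G ^ (3 * A * k * (H + 1))" by (simp add: power_mult[symmetric] power_add[symmetric] algebra_simps)
      also have "\<dots> \<le> G ^ Z" by (rule pw) (simp add: Z_def)
      finally have c1: "length (Vlist l' n) * length (Wlist l' n) ^ H \<le> Fn n" by (rule gG)
      have c2: "k + 3 \<le> Fn n" by (rule cG) (simp add: CK_def)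
      have c3: "n \<le> Fn n" using nG pw[of 1 Z] Z1 by (intro gG) auto
      have c4: "length (Vlist l' n) \<le> Fn n" using V[of l'] l' pw[of "3 * A * k" Z] by (intro gG) (auto simp: Z_def)
      have c5: "1 + length (PL l' n) \<le> Fn n"
      proof -
        have "G ^ (1 + 3 * A * k) \<le> G ^ Z" by (rule pw) (simp add: Z_def)
        hence "1 + length (PL l' n) \<le> G ^ Z + G ^ Z" using PL GZ by linarith
        also have "\<dots> = 2 * G ^ Z" by simp
        also have "\<dots> \<le> CK * G ^ Z" by (rule mult_le_mono1) (simp add: CK_def)
        finally show ?thesis using Fn by simp
      qed
      have c6: "length (PL l' n) * G ^ (2 * A) \<le> Fn n"
      proof -
        have "length (PL l' n) * G ^ (2 * A) \<le> G ^ (1 + 3 * A * k) * G ^ (2 * A)" using PL by simp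
        also have "\<dots> = G ^ (1 + 3 * A * k + 2 * A)" by (simp add: power_add)
        also have "\<dots> \<le> G ^ Z" by (rule pw) (auto simp: Z_def)
        finally show ?thesis by (rule gG)
      qed
      show "length (Vlist l' n) * length (Wlist l' n) ^ H \<le> Fn n \<and> k + 3 \<le> Fn n \<and> n \<le> Fn n \<and>
       length (Vlist l' n) \<le> Fn n \<and> 1 + length (PL l' n) \<le> Fn n \<and> length (PL l' n) * G ^ (2 * A) \<le> Fn n \<and>
       (\<forall>t\<in>set (Vlist l' n). \<forall>c<k. nat \<bar>acoef l' n t c\<bar> \<le> G ^ (2 * A))"
        using c1 c2 c3 c4 c5 c6 AB[of l'] l' by simp
    qed
  qed
  have fbC: "fb (Fn n) (OrG (map (\<lambda>u. cX nL n 0 u) (filter acc (Vlist nL n))))" if n1: "n \<ge> 1" for n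
  proof -
    have "length (filter acc (Vlist nL n)) \<le> length (Vlist nL n)" by simp
    also have "\<dots> \<le> 8 ^ (A * Defs.bitlen n * k)" using bound_facts(3)[OF Abd n1, of nL] by simp
    also have "\<dots> = (2 ^ Defs.bitlen n) ^ (3 * A * k)" by (rule pow8)
    also have "\<dots> \<le> (2 ^ Defs.bitlen n) ^ Z" by (rule power_increasing) (auto simp: Z_def)
    also have "\<dots> \<le> Fn n" by (simp add: Fn_def CK_def)
    finally show ?thesis using fbn[OF n1] by simp
  qed
  have depC: "cdepth (C m) \<le> d" for m
  proof (cases "m div K = 0")
    case True thus ?thesis by (simp add: C_def d_def cc_def cT_def cF_def cdepth.simps)
  next
    case False
    have "\<forall>c\<in>set (map (\<lambda>u. cX nL (m div K) 0 u) (filter acc (Vlist nL (m div K)))). cdepth c \<le> 12 * nL + 1"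
      using cX_depth by auto
    hence "cdepth (OrG (map (\<lambda>u. cX nL (m div K) 0 u) (filter acc (Vlist nL (m div K))))) \<le> 12 * nL + 2"
      by (intro dg(2)[where D="12 * nL + 1"]) auto
    thus ?thesis using False unfolding C_def d_def by simp
  qed
  have sizeC: "csize (C m) \<le> c * (m + 1) ^ c" for m
  proof (cases "m div K = 0")
    case True
    have "1 \<le> (m + 1) ^ c" by (rule one_le_power) simp
    hence "1 * 1 \<le> c * (m + 1) ^ c" by (intro mult_le_mono) (simp_all add: c_def)
    thus ?thesis using True by (simp add: C_def cc_def cT_def cF_def)
  next
    case False
    define n where "n = m div K"
    have n1: "n \<ge> 1" using False by (simp add: n_def)
    have nm: "n \<le> m" by (simp add: n_def)
    define G where "G = (2::nat) ^ Defs.bitlen n"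
    have G2: "G \<le> 2 * (m + 1)" using bl_two_pow[OF n1] nm by (simp add: G_def)
    have eqC: "C m = OrG (map (\<lambda>u. cX nL n 0 u) (filter acc (Vlist nL n)))"
      using False by (simp add: C_def n_def)
    have "csize (C m) \<le> (Fn n + 1) ^ cdepth (C m)"
      unfolding eqC by (rule fb_size[OF fbC[OF n1]])
    also have "\<dots> \<le> (Fn n + 1) ^ d" by (rule power_increasing[OF depC]) simp
    also have "\<dots> \<le> (2 * CK * 2 ^ Z * (m + 1) ^ Z) ^ d"
    proof (rule power_mono)
      have "Fn n + 1 \<le> 2 * Fn n" using Fn_def CK_def by simp
      also have "\<dots> = 2 * CK * G ^ Z" by (simp add: Fn_def G_def)
      also have "\<dots> \<le> 2 * CK * (2 * (m + 1)) ^ Z" by (intro mult_le_mono2 power_mono G2) simp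
      also have "\<dots> = 2 * CK * 2 ^ Z * (m + 1) ^ Z" by (simp only: power_mult_distrib mult.assoc)
      finally show "Fn n + 1 \<le> 2 * CK * 2 ^ Z * (m + 1) ^ Z" .
    qed simp
    also have "\<dots> = (2 * CK * 2 ^ Z) ^ d * (m + 1) ^ (Z * d)" by (simp add: power_mult_distrib power_mult)
    also have "\<dots> \<le> c * (m + 1) ^ c"
      by (intro mult_le_mono power_increasing) (auto simp: c_def)
    finally show ?thesis .
  qed
  have corr: "ceval (encode_word w) (C (length w * card (UNIV :: 'a set))) \<longleftrightarrow> w \<in> Lang" for w :: "'a list"
  proof (cases "w = []")
    case True thus ?thesis by (simp add: C_def)
  next
    case False
    have dv: "length w * card (UNIV :: 'a set) div K = length w" using K1 Kc by simp
    have nz: "length w \<noteq> 0" using False by simp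
    have "ceval (encode_word w) (C (length w * card (UNIV :: 'a set))) \<longleftrightarrow>
       (\<exists>u\<in>set (Vlist nL (length w)). acc u \<and> ceval (encode_word w) (cX nL (length w) 0 u))"
      using nz unfolding C_def dv by auto
    also have "\<dots> \<longleftrightarrow> (\<exists>u\<in>set (Vlist nL (length w)). acc u \<and> run w nL ! 0 = u)"
      using cX_correct[of nL w 0] False by simp
    also have "\<dots> \<longleftrightarrow> acc (run w nL ! 0)" using vs_in[of 0 w nL] False by auto
    also have "\<dots> \<longleftrightarrow> w \<in> Lang"
    proof -
      have "run w nL \<noteq> []" using False run_len[of w nL] by (metis length_0_conv)
      hence "hd (run w nL) = run w nL ! 0" by (rule hd_conv_nth)
      thus ?thesis using rec False unfolding run_def by metis
    qed
    finally show ?thesis .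
  qed
  show ?thesis unfolding TC0_def using depC sizeC corr by blast
qed

end

theorem proposition4:
  "(T_s_F :: ('a::finite) list set set) \<subseteq> TC0"
proof
  fix Lang :: "'a list set" assume "Lang \<in> T_s_F"
  then obtain k nL H \<phi> s f W b where
    phi: "\<forall>\<sigma> i. length (\<phi> \<sigma> i) = k" and emb: "emb_size_preserving \<phi>"
    and act: "\<forall>l \<in> {1..nL}. (\<forall>xs \<in> act_domain k H. length (f l xs) = k) \<and> act_size_preserving k H (f l)"
    and rec: "\<forall>w. w \<noteq> [] \<longrightarrow>
         ((\<Sum>(c, x) \<leftarrow> zip W (hd (tf_run k H \<phi> s f w nL)). c * fl_val x) + b > 0 \<longleftrightarrow> w \<in> Lang)"
    unfolding T_s_F_def by blast
  interpret tf k H \<phi> s f nL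
    by unfold_locales (use phi emb act in auto)
  show "Lang \<in> TC0"
    by (rule main_TC0[where acc = "\<lambda>u. (\<Sum>(c, x) \<leftarrow> zip W u. c * fl_val x) + b > 0"]) (use rec in simp)
qed

end
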